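(* Let $\rho\colon\mathrm{Isom}(\mathbf H^1_{\mathbb C})_o\to\mathrm{Isom}(\mathbf H^\infty_{\mathbb C})_o$ be irreducible, with $\eta_1,\eta_2,E,\langle\cdot,\cdot\rangle$ as in the context, and let $\rho\colon P\to U(B)$ also denote a continuous homomorphic lift of $\rho|_P$ normalized so that $B(\rho(g(\lambda,b))\eta_1,\eta_2)>0$ for all $\lambda>0,b\in\mathbb R$. Then there is a continuous isomorphism $\chi\colon\mathbb R_{>0}\to\mathbb R_{>0}$ such that for all $\lambda>0$, $b\in\mathbb R$, with respect to $\mathbb C\eta_1\oplus\mathbb C\eta_2\oplus E$, $$\rho(g(\lambda,b))=\begin{pmatrix}\chi(\lambda)&-\chi(\lambda)|c(\lambda,b)|^2/2+i\Delta(\lambda,b)&-\chi(\lambda)\langle\pi(\lambda,b)(\cdot),c(\lambda,b)\rangle\\0&\chi(\lambda)^{-1}&0\\0&c(\lambda,b)&\pi(\lambda,b)\end{pmatrix},$$ where, writing $\Delta(b)=\Delta(1,b)$, $c(b)=c(1,b)$, $\pi(b)=\pi(1,b)$, for all $\lambda>0$, $b,d\in\mathbb R$: (1) $\Delta(\lambda,b)\in\mathbb R$ and $(\lambda,b)\mapsto\Delta(\lambda,b)$ is continuous; (2) $c(\lambda,b)\in E$ and $g(\lambda,b)\mapsto c(\lambda,b)$ is continuous; (3) $\pi(\lambda,b)$ is unitary on $E$ and $g(\lambda,b)\mapsto\pi(\lambda,b)$ is a strongly continuous unitary representation of $P$; (4) $c(b+d)=c(b)+\pi(b)c(d)$; (5)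 $\Delta(\lambda,0)=0$ and $c(\lambda,0)=0$; (6) $\chi(\lambda)\pi(\lambda,0)c(b)=c(\lambda^2b)$; (7) $\chi(\lambda)^2\Delta(b)=\Delta(\lambda^2b)$; (8) $\Delta(-b)=-\Delta(b)$; (9) $\mathrm{Im}\langle c(d),c(b)\rangle=\Delta(d-b)-\Delta(d)+\Delta(b)$; (10) $\mathrm{Re}\langle c(d),c(b)\rangle=-\tfrac{|c(d-b)|^2}{2}+\tfrac{|c(b)|^2}{2}+\tfrac{|c(d)|^2}{2}$.
   Context: $\mathcal H$ is a separable complex Hilbert space with a strongly non-degenerate Hermitian form $B$ (linear in the first variable) of signature $(1,\infty)$; $\mathbf H^\infty_{\mathbb C}=\{[v]:B(v,v)>0\}$, $\cosh d([v],[w])=|B(v,w)|/\sqrt{B(v,v)B(w,w)}$, boundary = isotropic lines, $\mathrm{Isom}(\mathbf H^\infty_{\mathbb C})_o=PU(B)$. $\mathbf H^1_{\mathbb C}$: $\mathbb C^2$ with $B(z,w)=z_1\bar w_1-z_2\bar w_2$, $\xi_1=(e_1+e_2)/\sqrt2$, $\xi_2=(e_1-e_2)/\sqrt2$; $g(\lambda,b)\in SU(1,1)$ has matrix $\begin{pmatrix}\lambda&ib\\0&\lambda^{-1}\end{pmatrix}$ in basis $(\xi_1,\xi_2)$, $P=\{g(\lambda,b):\lambda>0,b\in\mathbb R\}$, identified with its image in $PU(1,1)=\mathrm{Isom}(\mathbf H^1_{\mathbb C})_o$. Representations are orbitally continuous homomorphisms; irreducible = no fixed point in $\mathbf H^\infty_{\mathbb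 C}\cup\partial\mathbf H^\infty_{\mathbb C}$, no invariant pair of boundary points, and no proper invariant complex hyperbolic subspace (projectivization of a closed complex subspace of signature $(1,m')$). For such $\rho$, $\rho(P)$ fixes a unique $\eta_1\in\partial\mathbf H^\infty_{\mathbb C}$ and $\eta_2$ denotes the other endpoint of the common axis of the hyperbolic isometries $\rho(g(\lambda,0))$, $\lambda\ne1$; fix isotropic representatives (same names) with $B(\eta_1,\eta_2)=1$, let $E=\eta_1^\perp\cap\eta_2^\perp$, $\langle u,v\rangle:=B(u,v)$ for $u,v\in E$ and $|u|^2:=\langle u,u\rangle$. *)

theory Defs
  imports "HOL-Analysis.Analysis"
begin

class cvector = real_vector +
  fixes cscale :: "complex \<Rightarrow> 'a \<Rightarrow> 'a"  (infixr \<open>*\<^sub>C\<close> 75)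
  assumes cscale_add_right: "a *\<^sub>C (x + y) = a *\<^sub>C x + a *\<^sub>C y"
    and cscale_add_left: "(a + b) *\<^sub>C x = a *\<^sub>C x + b *\<^sub>C x"
    and cscale_cscale: "a *\<^sub>C (b *\<^sub>C x) = (a * b) *\<^sub>C x"
    and cscale_one: "1 *\<^sub>C x = x"
    and scaleR_cscale: "scaleR r x = complex_of_real r *\<^sub>C x"

class cnormed_vector = cvector + real_normed_vector +
  assumes norm_cscale: "norm (a *\<^sub>C x) = cmod a * norm x"

definition hermitian_form :: "('h::cvector \<Rightarrow> 'h \<Rightarrow> complex) \<Rightarrow> bool" where
  "hermitian_form B \<longleftrightarrow>
     (\<forall>x y z. B (x + y) z = B x z + B y z) \<and>
     (\<forall>a x y. B (a *\<^sub>C x) y = a * B x y) \<and>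
     (\<forall>x y. B x y = cnj (B y x))"

text \<open>Norm attached to a fundamental decomposition
  H = C e0 (+) e0^perp (B positive on C e0, negative definite on e0^perp).\<close>
definition Jnorm :: "('h::cvector \<Rightarrow> 'h \<Rightarrow> complex) \<Rightarrow> 'h \<Rightarrow> 'h \<Rightarrow> real" where
  "Jnorm B e0 v =
     (let w = v - B v e0 *\<^sub>C e0 in sqrt ((cmod (B v e0))\<^sup>2 - Re (B w w)))"

text \<open>(H,B) is a separable complex Hilbert space (the type 'h, complete normed,
  separable) and B is a strongly non-degenerate Hermitian form of signature (1,infinity):
  there is a fundamental decomposition H = C e0 (+) e0^perp with B(e0,e0)=1,
  B negative definite on e0^perp, of infinite negative index, and whose
  associated Hilbert norm defines the topology of H.\<close>
definition sig_1_infty_form :: "('h::{cnormed_vector,banach} \<Rightarrow> 'h \<Rightarrow> complex) \<Rightarrow> bool" where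
  "sig_1_infty_form B \<longleftrightarrow>
     hermitian_form B \<and>
     (\<exists>D::'h set. countable D \<and> closure D = UNIV) \<and>
     (\<exists>e0. B e0 e0 = 1 \<and>
        (\<forall>v. B v e0 = 0 \<longrightarrow> v \<noteq> 0 \<longrightarrow> Re (B v v) < 0) \<and>
        (\<exists>K>0. \<forall>v. norm v \<le> K * Jnorm B e0 v \<and> Jnorm B e0 v \<le> K * norm v)) \<and>
     (\<forall>n. \<exists>f::nat \<Rightarrow> 'h. \<forall>i<n. \<forall>j<n. B (f i) (f j) = (if i = j then -1 else 0))"

definition cline :: "'h::cvector \<Rightarrow> 'h set" where
  "cline v = range (\<lambda>a. a *\<^sub>C v)"

definition unitaryB :: "('h::cvector \<Rightarrow> 'h \<Rightarrow> complex) \<Rightarrow> ('h \<Rightarrow> 'h) \<Rightarrow> bool" where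
  "unitaryB B T \<longleftrightarrow>
     (\<forall>x y. T (x + y) = T x + T y) \<and> (\<forall>a x. T (a *\<^sub>C x) = a *\<^sub>C T x) \<and>
     bij T \<and> (\<forall>x y. B (T x) (T y) = B x y)"

definition unitary_on :: "('h::cvector \<Rightarrow> 'h \<Rightarrow> complex) \<Rightarrow> 'h set \<Rightarrow> ('h \<Rightarrow> 'h) \<Rightarrow> bool" where
  "unitary_on B E T \<longleftrightarrow>
     (\<forall>x\<in>E. \<forall>y\<in>E. T (x + y) = T x + T y) \<and> (\<forall>a. \<forall>x\<in>E. T (a *\<^sub>C x) = a *\<^sub>C T x) \<and>
     bij_betw T E E \<and> (\<forall>x\<in>E. \<forall>y\<in>E. B (T x) (T y) = B x y)"

definition hdist :: "('h::cvector \<Rightarrow> 'h \<Rightarrow> complex) \<Rightarrow> 'h \<Rightarrow> 'h \<Rightarrow> real" where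
  "hdist B v w = arcosh (cmod (B v w) / sqrt (Re (B v v) * Re (B w w)))"

text \<open>Closed complex subspace containing a positive vector: its projectivization
  is a complex hyperbolic subspace (signature (1,m')).\<close>
definition hyp_subspace :: "('h::{cnormed_vector} \<Rightarrow> 'h \<Rightarrow> complex) \<Rightarrow> 'h set \<Rightarrow> bool" where
  "hyp_subspace B W \<longleftrightarrow>
     0 \<in> W \<and> (\<forall>x\<in>W. \<forall>y\<in>W. x + y \<in> W) \<and> (\<forall>a. \<forall>x\<in>W. a *\<^sub>C x \<in> W) \<and>
     closed W \<and> (\<exists>v\<in>W. Re (B v v) > 0)"

definition B11 :: "complex^2 \<Rightarrow> complex^2 \<Rightarrow> complex" where
  "B11 z w = z$1 * cnj (w$1) - z$2 * cnj (w$2)"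

definition SU11 :: "(complex^2^2) set" where
  "SU11 = {g. det g = 1 \<and> (\<forall>z w. B11 (g *v z) (g *v w) = B11 z w)}"

text \<open>Change of basis matrix: columns xi1 = (e1+e2)/sqrt 2, xi2 = (e1-e2)/sqrt 2
  (it is its own inverse).\<close>
definition Sxi :: "complex^2^2" where
  "Sxi = (1 / sqrt 2) *\<^sub>R vector [vector [1, 1], vector [1, -1]]"

text \<open>g(lambda,b): matrix (lambda, i b; 0, 1/lambda) in the basis (xi1, xi2).\<close>
definition gP :: "real \<Rightarrow> real \<Rightarrow> complex^2^2" where
  "gP l b = Sxi ** vector [vector [complex_of_real l, \<i> * complex_of_real b],
                           vector [0, complex_of_real (1 / l)]] ** Sxi"

definition Pgrp :: "(complex^2^2) set" where
  "Pgrp = {gP l b | l b. l > 0}"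

text \<open>A homomorphism rho : PU(1,1) = SU(1,1)/{+-1} -> PU(B) is described by a choice of
  lifts R g in U(B) of rho([g]) for g in SU(1,1): R is a projective homomorphism
  and R(-1) is a scalar.  Orbital continuity: for every x in H^infty, g -> rho(g) x is
  continuous for the hyperbolic metric.\<close>
definition proj_rep :: "('h::{cnormed_vector,banach} \<Rightarrow> 'h \<Rightarrow> complex) \<Rightarrow> (complex^2^2 \<Rightarrow> 'h \<Rightarrow> 'h) \<Rightarrow> bool" where
  "proj_rep B R \<longleftrightarrow>
     (\<forall>g\<in>SU11. unitaryB B (R g)) \<and>
     (\<forall>g\<in>SU11. \<forall>h\<in>SU11. \<exists>\<theta>. cmod \<theta> = 1 \<and> R (g ** h) = (\<lambda>v. \<theta> *\<^sub>C R g (R h v))) \<and>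
     (\<exists>\<theta>. cmod \<theta> = 1 \<and> R (- mat 1) = (\<lambda>v. \<theta> *\<^sub>C v)) \<and>
     (\<forall>v. Re (B v v) > 0 \<longrightarrow>
        (\<forall>g0\<in>SU11. ((\<lambda>g. hdist B (R g v) (R g0 v)) \<longlongrightarrow> 0) (at g0 within SU11)))"

text \<open>Irreducibility: no fixed point in H^infty or on its boundary, no invariant pair of
  boundary points, no proper invariant complex hyperbolic subspace.\<close>
definition irreducible_rep :: "('h::{cnormed_vector,banach} \<Rightarrow> 'h \<Rightarrow> complex) \<Rightarrow> (complex^2^2 \<Rightarrow> 'h \<Rightarrow> 'h) \<Rightarrow> bool" where
  "irreducible_rep B R \<longleftrightarrow>
     \<not> (\<exists>v. v \<noteq> 0 \<and> Re (B v v) \<ge> 0 \<and> (\<forall>g\<in>SU11. R g v \<in> cline v)) \<and>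
     \<not> (\<exists>v w. v \<noteq> 0 \<and> w \<noteq> 0 \<and> B v v = 0 \<and> B w w = 0 \<and> cline v \<noteq> cline w \<and>
          (\<forall>g\<in>SU11. (cline (R g v) = cline v \<and> cline (R g w) = cline w) \<or>
                     (cline (R g v) = cline w \<and> cline (R g w) = cline v))) \<and>
     \<not> (\<exists>W. hyp_subspace B W \<and> W \<noteq> UNIV \<and> (\<forall>g\<in>SU11. R g ` W \<subseteq> W))"

end

theory Submission
  imports Defs
begin


definition mat2 :: "complex \<Rightarrow> complex \<Rightarrow> complex \<Rightarrow> complex \<Rightarrow> complex^2^2" where
  "mat2 a b c d = vector [vector [a, b], vector [c, d]]"

lemma mat2_nth[simp]: "mat2 a b c d $ 1 $ 1 = a" "mat2 a b c d $ 1 $ 2 = b"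
   "mat2 a b c d $ 2 $ 1 = c" "mat2 a b c d $ 2 $ 2 = d"
  by (simp_all add: mat2_def)

lemma mat2_eq: "M = mat2 (M$1$1) (M$1$2) (M$2$1) (M$2$2)"
  by (simp add: vec_eq_iff forall_2)

lemma mat2_inj: "mat2 a b c d = mat2 a' b' c' d' \<longleftrightarrow> a = a' \<and> b = b' \<and> c = c' \<and> d = d'"
  by (metis mat2_nth)

lemma mat2_mult: "mat2 a b c d ** mat2 a' b' c' d' =
   mat2 (a*a' + b*c') (a*b' + b*d') (c*a' + d*c') (c*b' + d*d')"
  by (simp add: vec_eq_iff forall_2 matrix_matrix_mult_def sum_2)

lemma mat2_one: "mat 1 = mat2 1 0 0 1"
  by (simp add: vec_eq_iff forall_2 mat_def)

lemma mat2_uminus: "- mat2 a b c d = mat2 (-a) (-b) (-c) (-d)"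
  by (simp add: vec_eq_iff forall_2)

lemma mat2_chi: "mat2 a b c d = (\<chi> i j. if i = 1 then (if j = 1 then a else b) else (if j = 1 then c else d))"
  by (simp add: vec_eq_iff forall_2)

lemma mat2_vec: "mat2 a b c d *v z = vector [a * z$1 + b * z$2, c * z$1 + d * z$2]"
  by (simp add: vec_eq_iff forall_2 matrix_vector_mult_def sum_2)

lemma vec2_eq: "(z::complex^2) = vector [z$1, z$2]"
  by (simp add: vec_eq_iff forall_2)

definition s2 :: complex where "s2 = complex_of_real (1 / sqrt 2)"

lemma s2_sq: "s2 * s2 = 1/2"
proof -
  have "(1 / sqrt 2) * (1 / sqrt 2) = (1/2::real)" by (simp add: field_simps)
  then show ?thesis unfolding s2_def by (metis of_real_divide of_real_mult of_real_numeral of_real_1)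
qed

lemma Sxi_mat2: "Sxi = mat2 s2 s2 s2 (- s2)"
  by (simp add: Sxi_def s2_def vec_eq_iff forall_2 mat2_def of_real_def)

lemma Sxi_sq: "Sxi ** Sxi = mat 1"
proof -
  have "s2 * s2 + s2 * s2 = 1" "2 * (s2 * s2) = 1" by (simp_all add: s2_sq)
  then show ?thesis unfolding Sxi_mat2 mat2_mult mat2_one by (simp add: mat2_inj)
qed

definition Xm :: "complex^2^2 \<Rightarrow> complex^2^2" where "Xm M = Sxi ** M ** Sxi"

lemma Xm_mult: "Xm M ** Xm N = Xm (M ** N)"
  unfolding Xm_def by (metis (no_types, lifting) Sxi_sq matrix_mul_assoc matrix_mul_rid)

lemma Xm_inv: "Xm (Xm M) = M"
  unfolding Xm_def by (metis (no_types, lifting) Sxi_sq matrix_mul_assoc matrix_mul_rid matrix_mul_lid)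

lemma Xm_one: "Xm (mat 1) = mat 1"
  unfolding Xm_def by (simp add: Sxi_sq)

lemma Xm_uminus_one: "Xm (- mat 1) = - mat 1"
proof -
  have "s2 * s2 + s2 * s2 = 1" "2 * (s2 * s2) = 1" by (simp_all add: s2_sq)
  then show ?thesis unfolding Xm_def Sxi_mat2 mat2_one mat2_uminus mat2_mult by (simp add: mat2_inj algebra_simps)
qed

lemma gP_Xm: "gP l b = Xm (mat2 (of_real l) (\<i> * of_real b) 0 (of_real (1/l)))"
  unfolding gP_def Xm_def mat2_def ..

lemma gP_mult: "gP l b ** gP l' b' = gP (l*l') (l*b' + b/l')"
  unfolding gP_Xm Xm_mult mat2_mult by (simp add: mat2_inj algebra_simps)

lemma gP_one: "gP 1 0 = mat 1"
  unfolding gP_Xm by (simp add: mat2_one[symmetric] Xm_one)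



lemma s2_sq': "s2 * (s2 * x) = x / 2"
  by (metis mult.assoc s2_sq times_divide_eq_left mult_1)

lemma Xm_mat2: "Xm (mat2 a b c d) = mat2 ((a+b+c+d)/2) ((a-b+c-d)/2) ((a+b-c-d)/2) ((a-b-c+d)/2)"
  unfolding Xm_def Sxi_mat2 mat2_mult mat2_inj
  by (simp add: algebra_simps s2_sq' s2_sq add_divide_distrib diff_divide_distrib)



definition Bxi :: "complex^2 \<Rightarrow> complex^2 \<Rightarrow> complex" where
  "Bxi z w = z$1 * cnj (w$2) + z$2 * cnj (w$1)"

lemma cnj_s2[simp]: "cnj s2 = s2" by (simp add: s2_def)

lemma B11_Sxi: "B11 (Sxi *v z) (Sxi *v w) = Bxi z w"
proof -
  have "B11 (Sxi *v z) (Sxi *v w) = 2 * (s2 * s2) * (z$1 * cnj (w$2) + z$2 * cnj (w$1))"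
    unfolding B11_def Sxi_mat2 mat2_vec by (simp add: algebra_simps)
  also have "\<dots> = Bxi z w" by (simp add: s2_sq Bxi_def)
  finally show ?thesis .
qed

lemma Sxi_Sxi_vec: "Sxi *v (Sxi *v z) = z"
  by (simp add: matrix_vector_mul_assoc Sxi_sq)

lemma det_Sxi: "det Sxi * det Sxi = 1"
proof -
  have "det Sxi = - (2 * (s2 * s2))" unfolding Sxi_mat2 det_2 by simp
  then show ?thesis by (simp add: s2_sq)
qed

lemma det_Xm: "det (Xm M) = det M"
  unfolding Xm_def det_mul using det_Sxi by (simp add: algebra_simps)

lemma SU11_Xm: "Xm M \<in> SU11 \<longleftrightarrow> det M = 1 \<and> (\<forall>z w. Bxi (M *v z) (M *v w) = Bxi z w)"
proof -
  have *: "Xm M *v z = Sxi *v (M *v (Sxi *v z))" for z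
    unfolding Xm_def by (simp add: matrix_vector_mul_assoc matrix_mul_assoc)
  have "(\<forall>z w. B11 (Xm M *v z) (Xm M *v w) = B11 z w) \<longleftrightarrow> (\<forall>z w. Bxi (M *v z) (M *v w) = Bxi z w)"
  proof
    assume h: "\<forall>z w. B11 (Xm M *v z) (Xm M *v w) = B11 z w"
    show "\<forall>z w. Bxi (M *v z) (M *v w) = Bxi z w"
    proof (intro allI)
      fix z w
      have "B11 (Xm M *v (Sxi *v z)) (Xm M *v (Sxi *v w)) = B11 (Sxi *v z) (Sxi *v w)" using h by blast
      then show "Bxi (M *v z) (M *v w) = Bxi z w" unfolding * Sxi_Sxi_vec B11_Sxi .
    qed
  next
    assume h: "\<forall>z w. Bxi (M *v z) (M *v w) = Bxi z w"
    show "\<forall>z w. B11 (Xm M *v z) (Xm M *v w) = B11 z w"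
    proof (intro allI)
      fix z w
      have "B11 z w = B11 (Sxi *v (Sxi *v z)) (Sxi *v (Sxi *v w))" by (simp add: Sxi_Sxi_vec)
      then show "B11 (Xm M *v z) (Xm M *v w) = B11 z w" unfolding * B11_Sxi using h by simp
    qed
  qed
  then show ?thesis unfolding SU11_def using det_Xm[of M] by simp
qed



lemma scal1: fixes z1 z2 w1 w2 :: complex and a b c d :: real
  shows "(of_real a * z1 + \<i> * of_real b * z2) * (- \<i> * of_real c * w1 + of_real d * w2)
       + (\<i> * of_real c * z1 + of_real d * z2) * (of_real a * w1 - \<i> * of_real b * w2)
      = of_real (a*d + b*c) * (z1 * w2 + z2 * w1)"
proof -
  have i2: "\<i> * \<i> = -1" by simp
  show ?thesis by (simp add: algebra_simps)
qed
lemma real_form_SU11: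
  assumes "a*d + b*c = 1"
  shows "Xm (mat2 (of_real a) (\<i> * of_real b) (\<i> * of_real c) (of_real d)) \<in> SU11"
  unfolding SU11_Xm
proof (intro conjI allI)
  show "det (mat2 (of_real a) (\<i> * of_real b) (\<i> * of_real c) (of_real d)) = 1"
  proof -
    have "of_real a * of_real d - (\<i> * of_real b) * (\<i> * of_real c) = (of_real (a*d + b*c) :: complex)"
      by (simp add: algebra_simps)
    then show ?thesis unfolding det_2 using assms by simp
  qed
  fix z w :: "complex^2"
  have "Bxi (mat2 (of_real a) (\<i> * of_real b) (\<i> * of_real c) (of_real d) *v z)
            (mat2 (of_real a) (\<i> * of_real b) (\<i> * of_real c) (of_real d) *v w)
        = (of_real a * z$1 + \<i> * of_real b * z$2) * (- \<i> * of_real c * cnj (w$1) + of_real d * cnj (w$2))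
       + (\<i> * of_real c * z$1 + of_real d * z$2) * (of_real a * cnj (w$1) - \<i> * of_real b * cnj (w$2))"
    unfolding Bxi_def mat2_vec by simp
  also have "\<dots> = of_real (a*d + b*c) * Bxi z w" unfolding Bxi_def by (rule scal1)
  finally have "Bxi (mat2 (of_real a) (\<i> * of_real b) (\<i> * of_real c) (of_real d) *v z)
            (mat2 (of_real a) (\<i> * of_real b) (\<i> * of_real c) (of_real d) *v w)
        = of_real (a*d + b*c) * Bxi z w" .
  then show "Bxi (mat2 (of_real a) (\<i> * of_real b) (\<i> * of_real c) (of_real d) *v z)
            (mat2 (of_real a) (\<i> * of_real b) (\<i> * of_real c) (of_real d) *v w) = Bxi z w"
    using assms by simp
qed

lemma SU11_real_form:
  assumes "g \<in> SU11"
  shows "\<exists>a b c d. a*d + b*c = 1 \<and> g = Xm (mat2 (of_real a) (\<i> * of_real b) (\<i> * of_real c) (of_real d))"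
proof -
  define M where "M = Xm g"
  have gM: "g = Xm M" unfolding M_def Xm_inv ..
  define \<alpha> \<beta> \<gamma> \<delta> where "\<alpha> = M$1$1" "\<beta> = M$1$2" "\<gamma> = M$2$1" "\<delta> = M$2$2"
  have Mm: "M = mat2 \<alpha> \<beta> \<gamma> \<delta>" unfolding \<alpha>_\<beta>_\<gamma>_\<delta>_def by (rule mat2_eq)
  have det: "\<alpha> * \<delta> - \<beta> * \<gamma> = 1" and pres: "\<forall>z w. Bxi (M *v z) (M *v w) = Bxi z w"
    using assms unfolding gM SU11_Xm Mm det_2 by auto
  have e1: "Bxi (M *v vector [1,0]) (M *v vector [1,0]) = Bxi (vector [1,0]) (vector [1,0])"
   and e2: "Bxi (M *v vector [1,0]) (M *v vector [0,1]) = Bxi (vector [1,0]) (vector [0,1])"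
   and e3: "Bxi (M *v vector [0,1]) (M *v vector [0,1]) = Bxi (vector [0,1]) (vector [0,1])"
    using pres by blast+
  have q1: "\<alpha> * cnj \<gamma> + \<gamma> * cnj \<alpha> = 0" using e1 unfolding Mm mat2_vec Bxi_def by simp
  have q2: "\<alpha> * cnj \<delta> + \<gamma> * cnj \<beta> = 1" using e2 unfolding Mm mat2_vec Bxi_def by simp
  have q3: "\<beta> * cnj \<delta> + \<delta> * cnj \<beta> = 0" using e3 unfolding Mm mat2_vec Bxi_def by simp
  have q2': "cnj \<alpha> * \<delta> + cnj \<gamma> * \<beta> = 1" using arg_cong[OF q2, of cnj] by simp
  have rd: "cnj \<delta> = \<delta>"
  proof -
    have "cnj \<delta> = cnj \<delta> * (\<alpha> * \<delta> - \<beta> * \<gamma>)" using det by simp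
    also have "\<dots> = \<delta> * (\<alpha> * cnj \<delta> + \<gamma> * cnj \<beta>)"
      using q3 by algebra
    finally show ?thesis using q2 by simp
  qed
  have ra: "cnj \<alpha> = \<alpha>"
  proof -
    have "cnj \<alpha> = cnj \<alpha> * (\<alpha> * \<delta> - \<beta> * \<gamma>)" using det by simp
    also have "\<dots> = \<alpha> * (cnj \<alpha> * \<delta> + cnj \<gamma> * \<beta>)"
      using q1 by algebra
    finally show ?thesis using q2' by simp
  qed
  have rb: "cnj \<beta> = - \<beta>"
  proof -
    have "cnj \<beta> = cnj \<beta> * (\<alpha> * \<delta> - \<beta> * \<gamma>)" using det by simp
    also have "\<dots> = - \<beta> * (\<alpha> * cnj \<delta> + \<gamma> * cnj \<beta>)"
      using q3 by algebra
    finally show ?thesis using q2 by simp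
  qed
  have rc: "cnj \<gamma> = - \<gamma>"
  proof -
    have "cnj \<gamma> = cnj \<gamma> * (\<alpha> * \<delta> - \<beta> * \<gamma>)" using det by simp
    also have "\<dots> = - \<gamma> * (cnj \<alpha> * \<delta> + cnj \<gamma> * \<beta>)"
      using q1 by algebra
    finally show ?thesis using q2' by simp
  qed
  have ha: "\<alpha> = of_real (Re \<alpha>)" using ra by (simp add: complex_eq_iff)
  moreover have hd: "\<delta> = of_real (Re \<delta>)" using rd by (simp add: complex_eq_iff)
  moreover have hb: "\<beta> = \<i> * of_real (Im \<beta>)" using rb by (simp add: complex_eq_iff)
  moreover have hc: "\<gamma> = \<i> * of_real (Im \<gamma>)" using rc by (simp add: complex_eq_iff)
  ultimately have M2: "M = mat2 (of_real (Re \<alpha>)) (\<i> * of_real (Im \<beta>)) (\<i> * of_real (Im \<gamma>)) (of_real (Re \<delta>))"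
    unfolding Mm by simp
  have z: "Im \<alpha> = 0" "Im \<delta> = 0" "Re \<beta> = 0" "Re \<gamma> = 0"
    using ra rd rb rc by (simp_all add: complex_eq_iff)
  have "Re (\<alpha> * \<delta> - \<beta> * \<gamma>) = 1" using det by simp
  then have "Re \<alpha> * Re \<delta> + Im \<beta> * Im \<gamma> = 1" using z by simp
  then show ?thesis using gM M2 by blast
qed



definition Wm :: "complex^2^2" where "Wm = Xm (mat2 0 \<i> \<i> 0)"
definition Um :: "real \<Rightarrow> complex^2^2" where "Um c = Xm (mat2 1 0 (\<i> * of_real c) 1)"

lemma Xm_eq_iff: "Xm M = Xm N \<longleftrightarrow> M = N"
  by (metis Xm_inv)

lemma gP_Wm: "l \<noteq> 0 \<Longrightarrow> gP l 0 ** Wm = Wm ** gP (1/l) 0"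
  unfolding gP_Xm Wm_def Xm_mult mat2_mult by (simp add: mat2_inj mult.commute)

lemma Um_Wm: "Um b ** Wm = Wm ** gP 1 b"
  unfolding gP_Xm Wm_def Um_def Xm_mult mat2_mult by (simp add: mat2_inj mult.commute)

lemma Wm_SU11: "Wm \<in> SU11"
  using real_form_SU11[of 0 0 1 1] unfolding Wm_def by simp

lemma Um_SU11: "Um c \<in> SU11"
  using real_form_SU11[of 1 1 0 c] unfolding Um_def by simp

lemma gP_SU11: "l > 0 \<Longrightarrow> gP l b \<in> SU11"
  using real_form_SU11[of l "1/l" b 0] unfolding gP_Xm by simp

lemma Pgrp_SU11: "Pgrp \<subseteq> SU11"
  unfolding Pgrp_def using gP_SU11 by blast

lemma gP_Pgrp: "l > 0 \<Longrightarrow> gP l b \<in> Pgrp"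
  unfolding Pgrp_def by blast

lemma minus_one_SU11: "- mat 1 \<in> SU11"
proof -
  have "Xm (mat2 (of_real (-1)) (\<i> * of_real 0) (\<i> * of_real 0) (of_real (-1))) \<in> SU11"
    by (rule real_form_SU11) simp
  moreover have "mat2 (of_real (-1)) (\<i> * of_real 0) (\<i> * of_real 0) (of_real (-1)) = - mat 1"
    by (simp add: mat2_one mat2_uminus)
  ultimately show ?thesis by (simp add: Xm_uminus_one)
qed

lemma SU11_decomp:
  assumes "g \<in> SU11"
  shows "(\<exists>l b. l > 0 \<and> g = gP l b) \<or> (\<exists>l b. l > 0 \<and> g = (- mat 1) ** gP l b)
     \<or> (\<exists>x c y. g = gP 1 x ** Um c ** gP 1 y)"
proof -
  obtain a b c d where abcd: "a*d + b*c = 1"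
    and g: "g = Xm (mat2 (of_real a) (\<i> * of_real b) (\<i> * of_real c) (of_real d))"
    using SU11_real_form[OF assms] by blast
  show ?thesis
  proof (cases "c = 0")
    case True
    then have ad: "a * d = 1" using abcd by simp
    then have a0: "a \<noteq> 0" by auto
    have d: "d = 1 / a" using ad a0 by (simp add: field_simps)
    show ?thesis
    proof (cases "a > 0")
      case True
      have "g = gP a b" unfolding g gP_Xm using \<open>c = 0\<close> d by simp
      then show ?thesis using True by blast
    next
      case False
      then have "-a > 0" using a0 by simp
      have m0: "mat2 (-1) 0 0 (-1) = - mat 1" by (simp add: mat2_one mat2_uminus)
      have m1: "- mat 1 = Xm (mat2 (-1) 0 0 (-1))"
        unfolding m0 Xm_uminus_one ..
      have "g = (- mat 1) ** gP (-a) (-b)"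
        unfolding g gP_Xm m1 Xm_mult mat2_mult using \<open>c = 0\<close> d
        by (simp add: mat2_inj)
      then show ?thesis using \<open>-a > 0\<close> by blast
    qed
  next
    case False
    define x where "x = (1 - a) / c"
    define y where "y = (1 - d) / c"
    have ax: "a = 1 - x * c" unfolding x_def using False by simp
    have dy: "d = 1 - y * c" unfolding y_def using False by simp
    have bxy: "b = a * y + x" 
    proof -
      have h0: "c * (a * d + b * c) = c" using abcd by simp
      have h1: "a * (c * d) + b * (c * c) = c" using h0 by (simp add: algebra_simps)
      have "b * c = (a * y + x) * c" unfolding x_def y_def using False h1 by (simp add: field_simps)
      then show ?thesis using False by simp
    qed
    have "g = gP 1 x ** Um c ** gP 1 y"
      unfolding g gP_Xm Um_def Xm_mult mat2_mult Xm_eq_iff mat2_inj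
      unfolding ax dy bxy by (simp add: algebra_simps)
    then show ?thesis by blast
  qed
qed

lemma gP_mat2: "gP l b = mat2 ((of_real l + \<i> * of_real b + 1 / of_real l)/2) ((of_real l - \<i> * of_real b - 1 / of_real l)/2)
  ((of_real l + \<i> * of_real b - 1 / of_real l)/2) ((of_real l - \<i> * of_real b + 1 / of_real l)/2)"
  unfolding gP_Xm Xm_mat2 by simp

lemma gP_entries: "gP l b = (\<chi> i j. if i = 1 then (if j = 1 then (of_real l + \<i> * of_real b + 1 / of_real l)/2 else (of_real l - \<i> * of_real b - 1 / of_real l)/2)
   else (if j = 1 then (of_real l + \<i> * of_real b - 1 / of_real l)/2 else (of_real l - \<i> * of_real b + 1 / of_real l)/2))"
  unfolding gP_mat2 mat2_chi ..

lemma gP_continuous: "continuous_on ({0<..} \<times> UNIV) (\<lambda>p. gP (fst p) (snd p))"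
  unfolding gP_entries
  apply (intro continuous_on_vec_lambda)
  subgoal for i j by (cases "i = 1"; cases "j = 1"; simp; intro continuous_intros; auto)
  done



context cvector begin
lemma cscale_zero_left[simp]: "0 *\<^sub>C x = 0"
proof -
  have "0 *\<^sub>C x = 0 *\<^sub>C x + 0 *\<^sub>C x" using cscale_add_left[of 0 0 x] by simp
  then show ?thesis by simp
qed
lemma cscale_zero_right[simp]: "a *\<^sub>C 0 = 0"
proof -
  have "a *\<^sub>C 0 = a *\<^sub>C 0 + a *\<^sub>C 0" using cscale_add_right[of a 0 0] by simp
  then show ?thesis by simp
qed
lemma cscale_minus_left: "(- a) *\<^sub>C x = - (a *\<^sub>C x)"
proof -
  have "(- a) *\<^sub>C x + a *\<^sub>C x = 0" using cscale_add_left[of "-a" a x] by simp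
  then show ?thesis by (simp add: eq_neg_iff_add_eq_0)
qed
lemma cscale_minus_right: "a *\<^sub>C (- x) = - (a *\<^sub>C x)"
proof -
  have "a *\<^sub>C (- x) + a *\<^sub>C x = 0" using cscale_add_right[of a "-x" x] by simp
  then show ?thesis by (simp add: eq_neg_iff_add_eq_0)
qed
lemma cscale_diff_left: "(a - b) *\<^sub>C x = a *\<^sub>C x - b *\<^sub>C x"
  using cscale_add_left[of a "-b" x] by (simp add: cscale_minus_left)
lemma cscale_diff_right: "a *\<^sub>C (x - y) = a *\<^sub>C x - a *\<^sub>C y"
  using cscale_add_right[of a x "-y"] by (simp add: cscale_minus_right)
lemma cscale_of_real: "complex_of_real r *\<^sub>C x = r *\<^sub>R x"
  by (simp add: scaleR_cscale)
lemma cscale_eq_0_iff: "a *\<^sub>C x = 0 \<longleftrightarrow> a = 0 \<or> x = 0"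
proof
  assume h: "a *\<^sub>C x = 0"
  show "a = 0 \<or> x = 0"
  proof (cases "a = 0")
    case False
    have "x = (1/a) *\<^sub>C (a *\<^sub>C x)" using False by (simp add: cscale_cscale cscale_one)
    then show ?thesis using h by simp
  qed simp
qed auto
lemma cscale_minus_one: "(-1) *\<^sub>C x = - x"
  by (simp add: cscale_minus_left cscale_one)
end

locale herm =
  fixes B :: "'h::cvector \<Rightarrow> 'h \<Rightarrow> complex"
  assumes herm: "hermitian_form B"
begin

lemma B_add_left: "B (x + y) z = B x z + B y z" using herm unfolding hermitian_form_def by blast
lemma B_scale_left: "B (a *\<^sub>C x) y = a * B x y" using herm unfolding hermitian_form_def by blast
lemma B_sym: "B x y = cnj (B y x)" using herm unfolding hermitian_form_def by blast
lemma B_add_right: "B z (x + y) = B z x + B z y"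
  using B_sym[of z "x+y"] B_sym[of z x] B_sym[of z y] B_add_left[of x y z] by simp
lemma B_scale_right: "B x (a *\<^sub>C y) = cnj a * B x y"
  using B_sym[of x "a *\<^sub>C y"] B_sym[of x y] B_scale_left[of a y x] by simp
lemma B_zero_left[simp]: "B 0 y = 0"
  using B_scale_left[of 0 0 y] by simp
lemma B_zero_right[simp]: "B y 0 = 0"
  using B_sym[of y 0] by simp
lemma B_minus_left: "B (- x) y = - B x y"
  using B_scale_left[of "-1" x y] by (simp add: cscale_minus_one)
lemma B_minus_right: "B y (- x) = - B y x"
  using B_sym[of y "-x"] B_sym[of y x] B_minus_left[of x y] by simp
lemma B_diff_left: "B (x - y) z = B x z - B y z"
  using B_add_left[of x "-y" z] B_minus_left[of y z] by simp
lemma B_diff_right: "B z (x - y) = B z x - B z y"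
  using B_add_right[of z x "-y"] B_minus_right[of z y] by simp
lemma B_scaleR_left: "B (r *\<^sub>R x) y = of_real r * B x y"
  by (simp add: scaleR_cscale B_scale_left)
lemma B_scaleR_right: "B y (r *\<^sub>R x) = of_real r * B y x"
  by (simp add: scaleR_cscale B_scale_right)
lemma B_self_real: "B x x = of_real (Re (B x x))"
proof -
  have "Im (B x x) = 0" using B_sym[of x x] by (simp add: complex_eq_iff)
  then show ?thesis by (simp add: complex_eq_iff)
qed
lemma B_self_Im: "Im (B x x) = 0"
  using B_sym[of x x] by (simp add: complex_eq_iff)
lemma B_cnj_mult: "B x y * B y x = of_real ((cmod (B x y))\<^sup>2)"
  using B_sym[of y x] by (simp add: complex_norm_square[symmetric] del: of_real_power)

lemmas B_simps = B_add_left B_add_right B_scale_left B_scale_right B_minus_left B_minus_right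
  B_diff_left B_diff_right B_scaleR_left B_scaleR_right

end

lemma unitaryB_add: "unitaryB B T \<Longrightarrow> T (x + y) = T x + T y" unfolding unitaryB_def by blast
lemma unitaryB_scale: "unitaryB B T \<Longrightarrow> T (a *\<^sub>C x) = a *\<^sub>C T x" unfolding unitaryB_def by blast
lemma unitaryB_B: "unitaryB B T \<Longrightarrow> B (T x) (T y) = B x y" unfolding unitaryB_def by blast
lemma unitaryB_bij: "unitaryB B T \<Longrightarrow> bij T" unfolding unitaryB_def by blast
lemma unitaryB_zero: "unitaryB B T \<Longrightarrow> T 0 = 0"
  using unitaryB_scale[of B T 0 0] by simp
lemma unitaryB_minus: "unitaryB B T \<Longrightarrow> T (- x) = - T x"
  using unitaryB_scale[of B T "-1" x] by (simp add: cscale_minus_one)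
lemma unitaryB_diff: "unitaryB B T \<Longrightarrow> T (x - y) = T x - T y"
  using unitaryB_add[of B T x "-y"] unitaryB_minus[of B T y] by simp
lemma unitaryB_scaleR: "unitaryB B T \<Longrightarrow> T (r *\<^sub>R x) = r *\<^sub>R T x"
  by (simp add: scaleR_cscale unitaryB_scale)



context herm begin

lemma decomp_e0:
  assumes "B e0 e0 = 1"
  shows "B v w = B v e0 * cnj (B w e0) + B (v - B v e0 *\<^sub>C e0) (w - B w e0 *\<^sub>C e0)"
proof -
  define a where "a = B v e0"
  define b where "b = B w e0"
  have h: "B e0 w = cnj b" unfolding b_def using B_sym by blast
  have "B (v - a *\<^sub>C e0) (w - b *\<^sub>C e0) = B v w - cnj b * B v e0 - a * B e0 w + a * (cnj b * B e0 e0)"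
    by (simp only: B_diff_left B_diff_right B_scale_left B_scale_right) (simp add: algebra_simps)
  also have "\<dots> = B v w - a * cnj b" unfolding h assms a_def[symmetric] by (simp add: algebra_simps)
  finally show ?thesis unfolding a_def b_def by simp
qed

lemma perp_e0: "B e0 e0 = 1 \<Longrightarrow> B (v - B v e0 *\<^sub>C e0) e0 = 0"
  by (simp add: B_simps)

lemma neg_le:
  assumes neg: "\<forall>v. B v e0 = 0 \<longrightarrow> v \<noteq> 0 \<longrightarrow> Re (B v v) < 0" and u: "B u e0 = 0"
  shows "Re (B u u) \<le> 0"
proof (cases "u = 0")
  case False
  then have "Re (B u u) < 0" using neg u by blast
  then show ?thesis by simp
qed simp

lemma CS_neg:
  assumes neg: "\<forall>v. B v e0 = 0 \<longrightarrow> v \<noteq> 0 \<longrightarrow> Re (B v v) < 0"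
    and u: "B u e0 = 0" and v: "B v e0 = 0"
  shows "(cmod (B u v))\<^sup>2 \<le> Re (B u u) * Re (B v v)"
proof (cases "v = 0")
  case True
  then show ?thesis by simp
next
  case False
  define r where "r = Re (B v v)"
  have r: "r < 0" using neg v False unfolding r_def by blast
  have Bvv: "B v v = of_real r" unfolding r_def by (rule B_self_real)
  define p where "p = B u v"
  have Bvu: "B v u = cnj p" unfolding p_def by (rule B_sym)
  define t where "t = p / of_real r"
  define w where "w = u - t *\<^sub>C v"
  have we: "B w e0 = 0" unfolding w_def using u v by (simp add: B_simps)
  have ww: "Re (B w w) \<le> 0" by (rule neg_le[OF neg we])
  have e1: "B w w = B u u - cnj t * p - t * cnj p + t * cnj t * of_real r"
    unfolding w_def using Bvv Bvu p_def by (simp add: B_simps algebra_simps)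
  have e2: "t * cnj t * of_real r = p * cnj p / of_real r"
    unfolding t_def using r by (simp add: field_simps)
  have e3: "cnj t * p = p * cnj p / of_real r" "t * cnj p = p * cnj p / of_real r"
    unfolding t_def using r by (simp_all add: field_simps)
  have pp: "p * cnj p = of_real ((cmod p)\<^sup>2)" by (simp add: complex_norm_square del: of_real_power)
  have "B w w = B u u - p * cnj p / of_real r" unfolding e1 e2 e3 by simp
  also have "\<dots> = B u u - of_real ((cmod p)\<^sup>2 / r)" unfolding pp by simp
  finally have "Re (B w w) = Re (B u u) - (cmod p)\<^sup>2 / r" by simp
  then have "Re (B u u) - (cmod p)\<^sup>2 / r \<le> 0" using ww by simp
  then have "Re (B u u) \<le> (cmod p)\<^sup>2 / r" by simp
  then have "(cmod p)\<^sup>2 \<le> Re (B u u) * r" using r by (simp add: field_simps)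
  then show ?thesis unfolding p_def r_def .
qed

lemma sqrt_CS:
  fixes x y s t :: real
  assumes "x \<ge> 0" "y \<ge> 0" "s \<ge> 0" "t \<ge> 0"
  shows "x * y + s * t \<le> sqrt (x\<^sup>2 + s\<^sup>2) * sqrt (y\<^sup>2 + t\<^sup>2)"
proof -
  have "(x * y + s * t)\<^sup>2 \<le> (x\<^sup>2 + s\<^sup>2) * (y\<^sup>2 + t\<^sup>2)"
  proof -
    have "0 \<le> (x * t - s * y)\<^sup>2" by simp
    then show ?thesis by (simp add: power2_eq_square algebra_simps)
  qed
  then have "x * y + s * t \<le> sqrt ((x\<^sup>2 + s\<^sup>2) * (y\<^sup>2 + t\<^sup>2))"
    by (rule real_le_rsqrt)
  then show ?thesis by (simp add: real_sqrt_mult)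
qed

lemma B_bound_J:
  assumes e0: "B e0 e0 = 1" and neg: "\<forall>v. B v e0 = 0 \<longrightarrow> v \<noteq> 0 \<longrightarrow> Re (B v v) < 0"
  shows "cmod (B v w) \<le> Jnorm B e0 v * Jnorm B e0 w"
proof -
  define a where "a = B v e0"
  define b where "b = B w e0"
  define v' where "v' = v - a *\<^sub>C e0"
  define w' where "w' = w - b *\<^sub>C e0"
  have v'e: "B v' e0 = 0" and w'e: "B w' e0 = 0" unfolding v'_def w'_def a_def b_def using perp_e0 e0 by auto
  define P where "P = - Re (B v' v')"
  define Q where "Q = - Re (B w' w')"
  have P0: "P \<ge> 0" unfolding P_def using neg_le[OF neg v'e] by simp
  have Q0: "Q \<ge> 0" unfolding Q_def using neg_le[OF neg w'e] by simp
  have Bvw: "B v w = a * cnj b + B v' w'" unfolding a_def b_def v'_def w'_def by (rule decomp_e0[OF e0])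
  have cs: "(cmod (B v' w'))\<^sup>2 \<le> P * Q" using CS_neg[OF neg v'e w'e] unfolding P_def Q_def by simp
  have cs': "cmod (B v' w') \<le> sqrt P * sqrt Q"
    using cs by (metis real_le_rsqrt real_sqrt_mult)
  have "cmod (B v w) \<le> cmod a * cmod b + cmod (B v' w')"
    unfolding Bvw by (metis complex_mod_cnj norm_mult norm_triangle_ineq)
  also have "\<dots> \<le> cmod a * cmod b + sqrt P * sqrt Q" using cs' by simp
  also have "\<dots> \<le> sqrt ((cmod a)\<^sup>2 + (sqrt P)\<^sup>2) * sqrt ((cmod b)\<^sup>2 + (sqrt Q)\<^sup>2)"
    by (rule sqrt_CS) (use P0 Q0 in auto)
  also have "\<dots> = Jnorm B e0 v * Jnorm B e0 w"
    unfolding Jnorm_def Let_def using P0 Q0 unfolding P_def Q_def v'_def w'_def a_def b_def by simp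
  finally show ?thesis .
qed

lemma pos_perp:
  assumes e0: "B e0 e0 = 1" and neg: "\<forall>v. B v e0 = 0 \<longrightarrow> v \<noteq> 0 \<longrightarrow> Re (B v v) < 0"
    and x: "Re (B x x) > 0" and yx: "B y x = 0" and y: "Re (B y y) \<ge> 0"
  shows "y = 0"
proof -
  define a where "a = B x e0"
  define b where "b = B y e0"
  define x' where "x' = x - a *\<^sub>C e0"
  define y' where "y' = y - b *\<^sub>C e0"
  have x'e: "B x' e0 = 0" and y'e: "B y' e0 = 0" unfolding x'_def y'_def a_def b_def using perp_e0 e0 by auto
  define P where "P = - Re (B x' x')"
  define Q where "Q = - Re (B y' y')"
  have P0: "P \<ge> 0" unfolding P_def using neg_le[OF neg x'e] by simp
  have Q0: "Q \<ge> 0" unfolding Q_def using neg_le[OF neg y'e] by simp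
  have Bxx: "B x x = a * cnj a + B x' x'" unfolding a_def x'_def by (rule decomp_e0[OF e0])
  have Byy: "B y y = b * cnj b + B y' y'" unfolding b_def y'_def by (rule decomp_e0[OF e0])
  have Byx: "B y x = b * cnj a + B y' x'" unfolding a_def b_def y'_def x'_def by (rule decomp_e0[OF e0])
  have ax: "(cmod a)\<^sup>2 > P" using x unfolding Bxx P_def by (simp add: complex_norm_square[symmetric] del: of_real_power)
  have by': "(cmod b)\<^sup>2 \<ge> Q" using y unfolding Byy Q_def by (simp add: complex_norm_square[symmetric] del: of_real_power)
  have cs: "(cmod (B y' x'))\<^sup>2 \<le> Q * P" using CS_neg[OF neg y'e x'e] unfolding P_def Q_def by simp
  have "B y' x' = - (b * cnj a)" using yx Byx by (simp add: add_eq_0_iff)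
  then have "(cmod (B y' x'))\<^sup>2 = (cmod b)\<^sup>2 * (cmod a)\<^sup>2" by (simp add: norm_mult power_mult_distrib)
  then have main: "(cmod b)\<^sup>2 * (cmod a)\<^sup>2 \<le> Q * P" using cs by simp
  have "Q = 0"
  proof (rule ccontr)
    assume "Q \<noteq> 0"
    then have "Q > 0" using Q0 by simp
    have "Q * P < Q * (cmod a)\<^sup>2" using \<open>Q > 0\<close> ax by simp
    also have "\<dots> \<le> (cmod b)\<^sup>2 * (cmod a)\<^sup>2" using by' by (simp add: mult_right_mono)
    finally show False using main by simp
  qed
  then have y'0: "y' = 0" using neg y'e unfolding Q_def by fastforce
  have ca: "(cmod a)\<^sup>2 > 0" using ax P0 by linarith
  have "(cmod b)\<^sup>2 * (cmod a)\<^sup>2 \<le> 0" using main \<open>Q = 0\<close> by simp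
  then have "(cmod b)\<^sup>2 \<le> 0" using ca by (simp add: mult_le_0_iff)
  then have "(cmod b)\<^sup>2 = 0" by (simp add: order_antisym)
  then have "b = 0" by simp
  then show ?thesis using y'0 unfolding y'_def by simp
qed

end



locale eta = herm B for B :: "'h::cvector \<Rightarrow> 'h \<Rightarrow> complex" +
  fixes \<eta>1 \<eta>2 :: 'h
  assumes e11: "B \<eta>1 \<eta>1 = 0" and e22: "B \<eta>2 \<eta>2 = 0" and e12: "B \<eta>1 \<eta>2 = 1"
begin

lemma e21: "B \<eta>2 \<eta>1 = 1" using B_sym[of \<eta>2 \<eta>1] e12 by simp

definition EE :: "'h set" where "EE = {u. B u \<eta>1 = 0 \<and> B u \<eta>2 = 0}"

definition PE :: "'h \<Rightarrow> 'h" where "PE v = v - B v \<eta>2 *\<^sub>C \<eta>1 - B v \<eta>1 *\<^sub>C \<eta>2"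

lemma EE_iff: "u \<in> EE \<longleftrightarrow> B u \<eta>1 = 0 \<and> B u \<eta>2 = 0" unfolding EE_def by simp

lemma E_perp1: "u \<in> EE \<Longrightarrow> B \<eta>1 u = 0" using B_sym[of \<eta>1 u] unfolding EE_def by simp
lemma E_perp2: "u \<in> EE \<Longrightarrow> B \<eta>2 u = 0" using B_sym[of \<eta>2 u] unfolding EE_def by simp

lemma PE_in: "PE v \<in> EE"
  unfolding EE_def PE_def by (simp add: B_simps e11 e22 e12 e21)

lemma decomp: "v = B v \<eta>2 *\<^sub>C \<eta>1 + B v \<eta>1 *\<^sub>C \<eta>2 + PE v"
  unfolding PE_def by simp

lemma PE_E: "u \<in> EE \<Longrightarrow> PE u = u" unfolding PE_def EE_def by simp

lemma PE_add: "PE (x + y) = PE x + PE y" unfolding PE_def by (simp add: B_simps cscale_add_left algebra_simps)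
lemma PE_scale: "PE (a *\<^sub>C x) = a *\<^sub>C PE x" unfolding PE_def by (simp add: B_simps cscale_diff_right cscale_cscale)
lemma PE_eta1: "PE (a *\<^sub>C \<eta>1) = 0" unfolding PE_def by (simp add: B_simps e11 e12)
lemma PE_eta2: "PE (a *\<^sub>C \<eta>2) = 0" unfolding PE_def by (simp add: B_simps e21 e22)
lemma PE_diff: "PE (x - y) = PE x - PE y"
  using PE_add[of x "-y"] PE_scale[of "-1" y] by (simp add: cscale_minus_one)

lemma E_add: "u \<in> EE \<Longrightarrow> v \<in> EE \<Longrightarrow> u + v \<in> EE" unfolding EE_def by (simp add: B_simps)
lemma E_scale: "u \<in> EE \<Longrightarrow> a *\<^sub>C u \<in> EE" unfolding EE_def by (simp add: B_simps)
lemma E_zero: "0 \<in> EE" unfolding EE_def by simp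

lemma master:
  assumes "e \<in> EE" "e' \<in> EE"
  shows "B (p *\<^sub>C \<eta>1 + q *\<^sub>C \<eta>2 + e) (p' *\<^sub>C \<eta>1 + q' *\<^sub>C \<eta>2 + e') = p * cnj q' + q * cnj p' + B e e'"
  using assms E_perp1[OF assms(2)] E_perp2[OF assms(2)] unfolding EE_def
  by (simp add: B_simps e11 e22 e12 e21)

lemma coord_eq:
  assumes "e \<in> EE" "e' \<in> EE" "p *\<^sub>C \<eta>1 + q *\<^sub>C \<eta>2 + e = p' *\<^sub>C \<eta>1 + q' *\<^sub>C \<eta>2 + e'"
  shows "p = p'" "q = q'" "e = e'"
proof -
  have "B (p *\<^sub>C \<eta>1 + q *\<^sub>C \<eta>2 + e) \<eta>2 = p" using assms(1) unfolding EE_def by (simp add: B_simps e12 e22)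
  moreover have "B (p' *\<^sub>C \<eta>1 + q' *\<^sub>C \<eta>2 + e') \<eta>2 = p'" using assms(2) unfolding EE_def by (simp add: B_simps e12 e22)
  ultimately show pp: "p = p'" using assms(3) by simp
  have "B (p *\<^sub>C \<eta>1 + q *\<^sub>C \<eta>2 + e) \<eta>1 = q" using assms(1) unfolding EE_def by (simp add: B_simps e11 e21)
  moreover have "B (p' *\<^sub>C \<eta>1 + q' *\<^sub>C \<eta>2 + e') \<eta>1 = q'" using assms(2) unfolding EE_def by (simp add: B_simps e11 e21)
  ultimately show qq: "q = q'" using assms(3) by simp
  show "e = e'" using assms(3) pp qq by simp
qed

end



lemma additive_basic:
  fixes \<psi> :: "real \<Rightarrow> real"
  assumes add: "\<forall>s t. \<psi> (s + t) = \<psi> s + \<psi> t"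
  shows "\<psi> 0 = 0" "\<psi> (- s) = - \<psi> s" "\<psi> (of_nat n * s) = of_nat n * \<psi> s"
    "\<psi> (of_int k * s) = of_int k * \<psi> s"
proof -
  show z: "\<psi> 0 = 0" using add[rule_format, of 0 0] by simp
  show m: "\<psi> (- s) = - \<psi> s" for s using add[rule_format, of s "-s"] z by simp
  show n: "\<psi> (of_nat n * s) = of_nat n * \<psi> s" for n
  proof (induction n)
    case (Suc n)
    have "\<psi> (of_nat (Suc n) * s) = \<psi> (of_nat n * s + s)" by (simp add: algebra_simps)
    also have "\<dots> = of_nat n * \<psi> s + \<psi> s" using add Suc by simp
    finally show ?case by (simp add: algebra_simps)
  qed (simp add: z)
  show "\<psi> (of_int k * s) = of_int k * \<psi> s"
  proof (cases "k \<ge> 0")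
    case True
    then obtain n where "k = int n" by (metis nonneg_int_cases)
    then show ?thesis using n by simp
  next
    case False
    then obtain n where "k = - int n" by (metis neg_int_cases linorder_not_le less_imp_le)
    then show ?thesis using n m[of "of_nat n * s"] by simp
  qed
qed

lemma additive_period_zero:
  fixes \<psi> :: "real \<Rightarrow> real"
  assumes add: "\<forall>s t. \<psi> (s + t) = \<psi> s + \<psi> t" and cont: "continuous_on UNIV \<psi>"
    and tau: "\<tau> > 0" "\<psi> \<tau> = 0"
  shows "\<psi> t = 0"
proof -
  have "compact (\<psi> ` {0..\<tau>})"
    by (rule compact_continuous_image) (auto intro: continuous_on_subset[OF cont])
  then obtain M where M: "\<forall>x\<in>\<psi> ` {0..\<tau>}. norm x \<le> M" using compact_imp_bounded bounded_iff by metis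
  have bnd: "\<bar>\<psi> s\<bar> \<le> M" for s
  proof -
    define k where "k = floor (s / \<tau>)"
    define s' where "s' = s - of_int k * \<tau>"
    have "of_int k \<le> s / \<tau>" "s / \<tau> < of_int k + 1" unfolding k_def by linarith+
    then have "of_int k * \<tau> \<le> s" "s < (of_int k + 1) * \<tau>" using tau by (simp_all add: field_simps)
    then have "s' \<in> {0..\<tau>}" unfolding s'_def by (simp add: algebra_simps)
    moreover have "\<psi> s = \<psi> s'"
    proof -
      have "\<psi> s = \<psi> (s' + of_int k * \<tau>)" unfolding s'_def by simp
      also have "\<dots> = \<psi> s'" using add additive_basic(4)[OF add, of k \<tau>] tau by simp
      finally show ?thesis .
    qed
    ultimately show ?thesis using M by auto
  qed
  show ?thesis
  proof (rule ccontr)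
    assume ne: "\<psi> t \<noteq> 0"
    obtain n :: nat where n: "of_nat n > M / \<bar>\<psi> t\<bar>" using reals_Archimedean2 by blast
    have "of_nat n * \<bar>\<psi> t\<bar> > M" using n ne by (simp add: field_simps)
    moreover have "\<bar>\<psi> (of_nat n * t)\<bar> = of_nat n * \<bar>\<psi> t\<bar>"
      using additive_basic(3)[OF add] by (simp add: abs_mult)
    ultimately show False using bnd[of "of_nat n * t"] by simp
  qed
qed

lemma additive_surj:
  fixes \<psi> :: "real \<Rightarrow> real"
  assumes add: "\<forall>s t. \<psi> (s + t) = \<psi> s + \<psi> t" and cont: "continuous_on UNIV \<psi>"
    and t0: "\<psi> t0 \<noteq> 0"
  shows "\<exists>s. \<psi> s = u"
proof -
  obtain n :: nat where n: "of_nat n > \<bar>u\<bar> / \<bar>\<psi> t0\<bar>" using reals_Archimedean2 by blast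
  define p where "p = of_nat n * \<bar>\<psi> t0\<bar>"
  have up: "\<bar>u\<bar> \<le> p" unfolding p_def using n t0 by (simp add: field_simps)
  have conn: "connected (range \<psi>)" by (rule connected_continuous_image[OF cont connected_UNIV])
  have v1: "\<psi> (of_nat n * t0) = of_nat n * \<psi> t0" by (rule additive_basic(3)[OF add])
  have v2: "\<psi> (- (of_nat n * t0)) = - (of_nat n * \<psi> t0)" using additive_basic(2)[OF add] v1 by simp
  have "p \<in> range \<psi> \<and> - p \<in> range \<psi>"
  proof (cases "\<psi> t0 > 0")
    case True
    then have "p = of_nat n * \<psi> t0" unfolding p_def by simp
    then show ?thesis using v1 v2 by (metis rangeI)
  next
    case False
    then have "p = - (of_nat n * \<psi> t0)" unfolding p_def using t0 by simp
    then show ?thesis using v1 v2 by (metis rangeI minus_minus)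
  qed
  then have "{-p..p} \<subseteq> range \<psi>" using conn connected_contains_Icc by blast
  moreover have "u \<in> {-p..p}" using up by (simp add: abs_le_iff)
  ultimately have "u \<in> range \<psi>" by blast
  then show ?thesis by (metis rangeE)
qed

lemma chi_bij:
  fixes ch :: "real \<Rightarrow> real"
  assumes pos: "\<forall>x>0. ch x > 0" and mult: "\<forall>x>0. \<forall>y>0. ch (x * y) = ch x * ch y"
    and cont: "continuous_on {0<..} ch" and nontriv: "l0 > 0" "ch l0 \<noteq> 1"
  shows "bij_betw ch {0<..} {0<..}"
proof -
  define \<psi> where "\<psi> t = ln (ch (exp t))" for t
  have add: "\<forall>s t. \<psi> (s + t) = \<psi> s + \<psi> t"
  proof (intro allI)
    fix s t
    have p: "ch (exp s) > 0" "ch (exp t) > 0" using pos by simp_all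
    have "ch (exp (s + t)) = ch (exp s) * ch (exp t)" using mult by (simp add: exp_add)
    then show "\<psi> (s + t) = \<psi> s + \<psi> t" unfolding \<psi>_def using p by (simp add: ln_mult)
  qed
  have c1: "continuous_on UNIV (\<lambda>t. ch (exp t))"
    by (rule continuous_on_compose2[OF cont]) (auto intro!: continuous_intros)
  have cont\<psi>: "continuous_on UNIV \<psi>"
    unfolding \<psi>_def using pos by (intro continuous_on_ln c1) (metis exp_gt_zero less_irrefl)
  have hback: "ch x = exp (\<psi> (ln x))" if "x > 0" for x
    unfolding \<psi>_def using that pos by simp
  have nt: "\<psi> (ln l0) \<noteq> 0" using hback[OF nontriv(1)] nontriv(2) by auto
  have inj: "inj_on ch {0<..}"
  proof (rule inj_onI)
    fix x y assume x: "x \<in> {0<..}" and y: "y \<in> {0<..}" and e: "ch x = ch y"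
    show "x = y"
    proof (rule ccontr)
      assume "x \<noteq> y"
      then have "ln x \<noteq> ln y" using x y by simp
      define \<tau> where "\<tau> = \<bar>ln y - ln x\<bar>"
      have \<tau>: "\<tau> > 0" unfolding \<tau>_def using \<open>ln x \<noteq> ln y\<close> by simp
      have "\<psi> (ln x) = \<psi> (ln y)" using e hback x y by simp
      then have d: "\<psi> (ln y - ln x) = 0" using add additive_basic(2)[OF add, of "ln x"] 
        by (metis diff_conv_add_uminus right_minus)
      have "\<psi> \<tau> = 0"
        unfolding \<tau>_def using d additive_basic(2)[OF add, of "ln y - ln x"] by (simp add: abs_if)
      then have "\<psi> (ln l0) = 0" using additive_period_zero[OF add cont\<psi> \<tau>] by blast
      then show False using nt by simp
    qed
  qed
  have "ch ` {0<..} = {0<..}"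
  proof
    show "ch ` {0<..} \<subseteq> {0<..}" using pos by auto
    show "{0<..} \<subseteq> ch ` {0<..}"
    proof
      fix v :: real assume "v \<in> {0<..}"
      then have v: "v > 0" by simp
      obtain s where s: "\<psi> s = ln v" using additive_surj[OF add cont\<psi> nt] by blast
      have "ch (exp s) = v" using hback[of "exp s"] s v by simp
      then show "v \<in> ch ` {0<..}" by (metis exp_gt_zero greaterThan_iff image_eqI)
    qed
  qed
  then show ?thesis using inj unfolding bij_betw_def by blast
qed



locale mainloc = eta B \<eta>1 \<eta>2 for B :: "'h::{cnormed_vector,banach} \<Rightarrow> 'h \<Rightarrow> complex" and \<eta>1 \<eta>2 +
  fixes R L :: "complex^2^2 \<Rightarrow> 'h \<Rightarrow> 'h"
  assumes form: "sig_1_infty_form B"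
    and rep: "proj_rep B R"
    and irred: "irreducible_rep B R"
    and eta1_fix: "\<forall>g\<in>Pgrp. R g \<eta>1 \<in> cline \<eta>1"
    and eta2_fix: "\<forall>l>0. R (gP l 0) \<eta>2 \<in> cline \<eta>2"
    and lift_unitary: "\<forall>g\<in>Pgrp. unitaryB B (L g)"
    and lift_proj: "\<forall>g\<in>Pgrp. \<exists>\<theta>. cmod \<theta> = 1 \<and> L g = (\<lambda>v. \<theta> *\<^sub>C R g v)"
    and lift_hom: "\<forall>g\<in>Pgrp. \<forall>h\<in>Pgrp. L (g ** h) = L g \<circ> L h"
    and lift_cont: "\<forall>v. continuous_on Pgrp (\<lambda>g. L g v)"
    and lift_norm: "\<forall>g\<in>Pgrp. Im (B (L g \<eta>1) \<eta>2) = 0 \<and> Re (B (L g \<eta>1) \<eta>2) > 0"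
begin

lemma sigE: obtains e0 K where "B e0 e0 = 1" "\<forall>v. B v e0 = 0 \<longrightarrow> v \<noteq> 0 \<longrightarrow> Re (B v v) < 0"
  "K > 0" "\<forall>v. norm v \<le> K * Jnorm B e0 v \<and> Jnorm B e0 v \<le> K * norm v"
  using form unfolding sig_1_infty_form_def by blast

lemma B_bounded_linear: "bounded_linear (\<lambda>v. B v w)"
proof -
  obtain e0 K where e0: "B e0 e0 = 1" and neg: "\<forall>v. B v e0 = 0 \<longrightarrow> v \<noteq> 0 \<longrightarrow> Re (B v v) < 0"
    and K: "K > 0" "\<forall>v. norm v \<le> K * Jnorm B e0 v \<and> Jnorm B e0 v \<le> K * norm v"
    by (rule sigE)
  have "Re (B (w - B w e0 *\<^sub>C e0) (w - B w e0 *\<^sub>C e0)) \<le> 0"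
    by (rule neg_le[OF neg perp_e0[OF e0]])
  then have J0: "Jnorm B e0 w \<ge> 0" unfolding Jnorm_def Let_def
    by (metis add_nonneg_nonneg diff_conv_add_uminus neg_0_le_iff_le real_sqrt_ge_zero zero_le_power2)
  show ?thesis
  proof (rule bounded_linear_intro[where K = "K * Jnorm B e0 w"])
    show "B (x + y) w = B x w + B y w" for x y by (rule B_add_left)
    show "B (r *\<^sub>R x) w = r *\<^sub>R B x w" for r x by (simp add: B_scaleR_left scaleR_conv_of_real)
    fix x
    have "norm (B x w) \<le> Jnorm B e0 x * Jnorm B e0 w" by (rule B_bound_J[OF e0 neg])
    also have "\<dots> \<le> (K * norm x) * Jnorm B e0 w" using K J0 by (simp add: mult_right_mono)
    finally show "norm (B x w) \<le> norm x * (K * Jnorm B e0 w)" by (simp add: algebra_simps)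
  qed
qed

lemma B_continuous_on: "continuous_on S f \<Longrightarrow> continuous_on S (\<lambda>x. B (f x) w)"
  using bounded_linear.continuous_on[OF B_bounded_linear] by blast

lemma B_tendsto: "(f \<longlongrightarrow> a) F \<Longrightarrow> ((\<lambda>x. B (f x) w) \<longlongrightarrow> B a w) F"
  using bounded_linear.tendsto[OF B_bounded_linear] by blast

lemma pos_perp':
  assumes "Re (B x x) > 0" "B y x = 0" "Re (B y y) \<ge> 0" shows "y = 0"
proof -
  obtain e0 K where e0: "B e0 e0 = 1" and neg: "\<forall>v. B v e0 = 0 \<longrightarrow> v \<noteq> 0 \<longrightarrow> Re (B v v) < 0"
    by (rule sigE)
  show ?thesis by (rule pos_perp[OF e0 neg assms])
qed

lemma equality_case:
  assumes y: "Re (B y y) > 0" and zz: "B z z = B y y" and zy: "cmod (B z y) = Re (B y y)"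
  shows "z \<in> cline y"
proof -
  define s where "s = Re (B y y)"
  have s: "s > 0" using y s_def by simp
  have Byy: "B y y = of_real s" unfolding s_def by (rule B_self_real)
  define \<theta> where "\<theta> = B z y / of_real s"
  define u where "u = z - \<theta> *\<^sub>C y"
  have uy: "B u y = 0" unfolding u_def \<theta>_def using Byy s by (simp add: B_simps)
  have "B u u = B z z - cnj \<theta> * B z y - \<theta> * B y z + \<theta> * cnj \<theta> * B y y"
    unfolding u_def by (simp add: B_simps algebra_simps)
  also have "\<dots> = of_real s - of_real ((cmod (B z y))\<^sup>2) / of_real s"
    unfolding \<theta>_def zz Byy using s B_cnj_mult[of z y] B_sym[of y z]
    by (simp add: field_simps)
  also have "\<dots> = 0" using zy s unfolding s_def by (simp add: power2_eq_square)
  finally have "B u u = 0" .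
  then have "u = 0" using pos_perp'[OF y uy] by simp
  then have "z = \<theta> *\<^sub>C y" unfolding u_def by simp
  then show ?thesis unfolding cline_def by blast
qed

lemma R_unitary: "g \<in> SU11 \<Longrightarrow> unitaryB B (R g)"
  using rep unfolding proj_rep_def by blast

lemma R_comp: assumes "g \<in> SU11" "h \<in> SU11"
  obtains \<theta> where "\<theta> \<noteq> 0" "\<And>v. R g (R h v) = \<theta> *\<^sub>C R (g ** h) v"
proof -
  obtain \<theta> where th: "cmod \<theta> = 1" "R (g ** h) = (\<lambda>v. \<theta> *\<^sub>C R g (R h v))"
    using rep assms unfolding proj_rep_def by blast
  have "\<theta> \<noteq> 0" using th by auto
  have "R g (R h v) = (1/\<theta>) *\<^sub>C R (g ** h) v" for v
    using th \<open>\<theta> \<noteq> 0\<close> by (simp add: cscale_cscale cscale_one)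
  moreover have "1/\<theta> \<noteq> 0" using \<open>\<theta> \<noteq> 0\<close> by simp
  ultimately show ?thesis using that by blast
qed

lemma cline_scale: "w \<in> cline v \<Longrightarrow> a *\<^sub>C w \<in> cline v"
  unfolding cline_def by (auto simp: cscale_cscale)

lemma R_fix_comp:
  assumes "g \<in> SU11" "h \<in> SU11" "R g v \<in> cline v" "R h v \<in> cline v"
  shows "R (g ** h) v \<in> cline v"
proof -
  obtain \<theta> where th: "\<theta> \<noteq> 0" "\<And>v. R g (R h v) = \<theta> *\<^sub>C R (g ** h) v" using R_comp[OF assms(1,2)] by blast
  obtain a where a: "R h v = a *\<^sub>C v" using assms(4) unfolding cline_def by blast
  have "R g (R h v) = a *\<^sub>C R g v" using a unitaryB_scale[OF R_unitary[OF assms(1)]] by simp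
  then have "R g (R h v) \<in> cline v" using assms(3) cline_scale by simp
  then have "(1/\<theta>) *\<^sub>C (\<theta> *\<^sub>C R (g ** h) v) \<in> cline v" using th cline_scale by metis
  then show ?thesis using th by (simp add: cscale_cscale cscale_one)
qed

lemma R_minus_one_fix: "R (- mat 1) v \<in> cline v"
  using rep unfolding proj_rep_def cline_def by auto

lemma L_proj: assumes "g \<in> Pgrp" obtains \<theta> where "cmod \<theta> = 1" "\<And>v. L g v = \<theta> *\<^sub>C R g v"
  using lift_proj assms by metis

lemma L_unitary: "l > 0 \<Longrightarrow> unitaryB B (L (gP l b))"
  using lift_unitary gP_Pgrp by blast

lemma L_hom: "l > 0 \<Longrightarrow> l' > 0 \<Longrightarrow> L (gP l b) (L (gP l' b') v) = L (gP (l*l') (l*b' + b/l')) v"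
  using lift_hom gP_Pgrp gP_mult by (metis comp_apply)

lemma L_one: "L (gP 1 0) v = v"
proof -
  have u: "unitaryB B (L (gP 1 0))" by (rule L_unitary) simp
  have h: "L (gP 1 0) (L (gP 1 0) w) = L (gP 1 0) w" for w using L_hom[of 1 1 0 0 w] by simp
  obtain w where "v = L (gP 1 0) w" using unitaryB_bij[OF u] by (metis bij_pointE)
  then show ?thesis using h by simp
qed

lemma L_inv: "l > 0 \<Longrightarrow> L (gP l b) (L (gP (1/l) (-b)) v) = v"
  using L_hom[of l "1/l" b "-b" v] L_one by simp

lemma L_inv': "l > 0 \<Longrightarrow> L (gP (1/l) (-b)) (L (gP l b) v) = v"
  using L_hom[of "1/l" l "-b" b v] L_one by (simp add: field_simps)

lemma L_cont: "continuous_on ({0<..} \<times> UNIV) (\<lambda>p. L (gP (fst p) (snd p)) v)"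
proof -
  have "continuous_on ({0<..} \<times> UNIV) ((\<lambda>g. L g v) \<circ> (\<lambda>p. gP (fst p) (snd p)))"
  proof (rule continuous_on_compose)
    show "continuous_on ({0<..} \<times> UNIV) (\<lambda>p. gP (fst p) (snd p))" by (rule gP_continuous)
    show "continuous_on ((\<lambda>p. gP (fst p) (snd p)) ` ({0<..} \<times> UNIV)) (\<lambda>g. L g v)"
    proof (rule continuous_on_subset)
      show "continuous_on Pgrp (\<lambda>g. L g v)" using lift_cont by blast
      show "(\<lambda>p. gP (fst p) (snd p)) ` ({0<..} \<times> UNIV) \<subseteq> Pgrp" by (auto intro: gP_Pgrp)
    qed
  qed
  then show ?thesis by (simp add: comp_def)
qed

lemma L_cont1: "continuous_on UNIV (\<lambda>b. L (gP 1 b) v)"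
proof -
  have "continuous_on UNIV ((\<lambda>p. L (gP (fst p) (snd p)) v) \<circ> (\<lambda>b. (1::real, b)))"
    by (rule continuous_on_compose) (auto intro!: continuous_intros intro: continuous_on_subset[OF L_cont])
  then show ?thesis by (simp add: comp_def)
qed

lemma L_cont_l: "continuous_on {0<..} (\<lambda>l. L (gP l b) v)"
proof -
  have "continuous_on {0<..} ((\<lambda>p. L (gP (fst p) (snd p)) v) \<circ> (\<lambda>l. (l, b)))"
    by (rule continuous_on_compose) (auto intro!: continuous_intros intro: continuous_on_subset[OF L_cont])
  then show ?thesis by (simp add: comp_def)
qed

end



context mainloc begin

definition Aa :: "real \<Rightarrow> real \<Rightarrow> complex" where "Aa l b = B (L (gP l b) \<eta>1) \<eta>2"
definition Ar :: "real \<Rightarrow> real \<Rightarrow> real" where "Ar l b = Re (Aa l b)"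

lemma L_eta1_cline: assumes "l > 0" shows "L (gP l b) \<eta>1 = Aa l b *\<^sub>C \<eta>1"
proof -
  have g: "gP l b \<in> Pgrp" using assms by (rule gP_Pgrp)
  obtain \<theta> where th: "\<And>v. L (gP l b) v = \<theta> *\<^sub>C R (gP l b) v" using L_proj[OF g] by blast
  obtain a where a: "R (gP l b) \<eta>1 = a *\<^sub>C \<eta>1" using eta1_fix g unfolding cline_def by blast
  have L1: "L (gP l b) \<eta>1 = (\<theta> * a) *\<^sub>C \<eta>1" using th a by (simp add: cscale_cscale)
  then have "Aa l b = \<theta> * a" unfolding Aa_def by (simp add: B_simps e12)
  then show ?thesis using L1 by simp
qed

lemma Aa_real: "l > 0 \<Longrightarrow> Aa l b = of_real (Ar l b) \<and> Ar l b > 0"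
  using lift_norm gP_Pgrp unfolding Aa_def Ar_def by (simp add: complex_eq_iff)

lemma L_eta1_r: "l > 0 \<Longrightarrow> L (gP l b) \<eta>1 = of_real (Ar l b) *\<^sub>C \<eta>1"
  using L_eta1_cline Aa_real by simp

lemma Ar_mult: assumes "l > 0" "l' > 0"
  shows "Ar (l*l') (l*b' + b/l') = Ar l b * Ar l' b'"
proof -
  have "L (gP (l*l') (l*b' + b/l')) \<eta>1 = L (gP l b) (L (gP l' b') \<eta>1)" using L_hom assms by simp
  also have "\<dots> = of_real (Ar l' b') *\<^sub>C of_real (Ar l b) *\<^sub>C \<eta>1"
    using L_eta1_r assms unitaryB_scale[OF L_unitary[OF assms(1)]] by simp
  finally have "of_real (Ar (l*l') (l*b' + b/l')) *\<^sub>C \<eta>1 = of_real (Ar l' b' * Ar l b) *\<^sub>C \<eta>1"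
    using L_eta1_r assms by (simp add: cscale_cscale)
  then have "B (of_real (Ar (l*l') (l*b' + b/l')) *\<^sub>C \<eta>1) \<eta>2 = B (of_real (Ar l' b' * Ar l b) *\<^sub>C \<eta>1) \<eta>2" by simp
  then have "complex_of_real (Ar (l*l') (l*b' + b/l')) = complex_of_real (Ar l' b') * complex_of_real (Ar l b)"
    by (simp add: B_simps e12)
  then show ?thesis by (metis of_real_eq_iff of_real_mult mult.commute)
qed

lemma Ar_one: "Ar 1 0 = 1"
  unfolding Ar_def Aa_def using L_one e12 by simp

lemma Ar_N: "Ar 1 b = 1"
proof -
  have pos: "Ar 1 b > 0" using Aa_real by simp
  have add: "Ar 1 (x + y) = Ar 1 x * Ar 1 y" for x y using Ar_mult[of 1 1 y x] by (simp add: add.commute)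
  have "Ar 1 (4*b) = Ar 2 0 * Ar 1 b * Ar (1/2) 0"
  proof -
    have "Ar 2 (2*b) = Ar 2 0 * Ar 1 b" using Ar_mult[of 2 1 b 0] by simp
    moreover have "Ar 1 (4*b) = Ar 2 (2*b) * Ar (1/2) 0" using Ar_mult[of 2 "1/2" 0 "2*b"] by simp
    ultimately show ?thesis by simp
  qed
  moreover have "Ar 2 0 * Ar (1/2) 0 = 1" using Ar_mult[of 2 "1/2" 0 0] Ar_one by simp
  ultimately have e4: "Ar 1 (4*b) = Ar 1 b" by (simp add: algebra_simps)
  have "Ar 1 (4*b) = Ar 1 b ^ 4"
    using add[of "2*b" "2*b"] add[of b b] by (simp add: power4_eq_xxxx algebra_simps)
  then have "Ar 1 b ^ 4 = Ar 1 b" using e4 by simp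
  then have "Ar 1 b ^ 3 = 1" using pos by (simp add: power_Suc power3_eq_cube power4_eq_xxxx)
  then have "Ar 1 b ^ 3 = 1 ^ 3" by simp
  then show ?thesis using pos power_eq_iff_eq_base[of 3 "Ar 1 b" 1] by simp
qed

lemma Ar_lb: "l > 0 \<Longrightarrow> Ar l b = Ar l 0"
  using Ar_mult[of 1 l 0 "b*l"] Ar_N by simp

definition chi :: "real \<Rightarrow> real" where "chi l = Ar l 0"

lemma chi_pos: "l > 0 \<Longrightarrow> chi l > 0" unfolding chi_def using Aa_real by blast

lemma chi_mult: "l > 0 \<Longrightarrow> l' > 0 \<Longrightarrow> chi (l * l') = chi l * chi l'"
  unfolding chi_def using Ar_mult[of l l' 0 0] by simp

lemma chi_one: "chi 1 = 1" unfolding chi_def by (rule Ar_one)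

lemma L_eta1: "l > 0 \<Longrightarrow> L (gP l b) \<eta>1 = of_real (chi l) *\<^sub>C \<eta>1"
  unfolding chi_def using L_eta1_r[of l b] Ar_lb[of l b] by simp

lemma chi_cont: "continuous_on {0<..} chi"
proof -
  have "continuous_on {0<..} (\<lambda>l. Re (B (L (gP l 0) \<eta>1) \<eta>2))"
    by (intro continuous_intros B_continuous_on L_cont_l)
  then show ?thesis unfolding chi_def Ar_def Aa_def .
qed

lemma eta1_pre: "l > 0 \<Longrightarrow> L (gP l b) (of_real (1 / chi l) *\<^sub>C \<eta>1) = \<eta>1"
  using L_eta1 chi_pos[of l] unitaryB_scale[OF L_unitary] by (simp add: cscale_cscale cscale_one)

lemma L_eta2_a: assumes "l > 0" shows "L (gP l 0) \<eta>2 = of_real (1 / chi l) *\<^sub>C \<eta>2"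
proof -
  have g: "gP l 0 \<in> Pgrp" using assms by (rule gP_Pgrp)
  obtain \<theta> where th: "\<And>v. L (gP l 0) v = \<theta> *\<^sub>C R (gP l 0) v" using L_proj[OF g] by blast
  obtain a where a: "R (gP l 0) \<eta>2 = a *\<^sub>C \<eta>2" using eta2_fix assms unfolding cline_def by blast
  have L2: "L (gP l 0) \<eta>2 = (\<theta> * a) *\<^sub>C \<eta>2" using th a by (simp add: cscale_cscale)
  have "B (L (gP l 0) \<eta>1) (L (gP l 0) \<eta>2) = 1" using unitaryB_B[OF L_unitary[OF assms]] e12 by simp
  then have "of_real (chi l) * cnj (\<theta> * a) = 1" using L2 L_eta1[OF assms] by (simp add: B_simps e12 mult.commute mult.left_commute)
  then have "cnj (\<theta> * a) = of_real (1 / chi l)" using chi_pos[OF assms] by (simp add: field_simps)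
  then have "\<theta> * a = of_real (1 / chi l)" by (metis complex_cnj_cnj complex_cnj_complex_of_real)
  then show ?thesis using L2 by simp
qed

definition Dl :: "real \<Rightarrow> real \<Rightarrow> real" where "Dl l b = Im (B (L (gP l b) \<eta>2) \<eta>2)"
definition cc :: "real \<Rightarrow> real \<Rightarrow> 'h" where "cc l b = PE (L (gP l b) \<eta>2)"
definition pp :: "real \<Rightarrow> real \<Rightarrow> 'h \<Rightarrow> 'h" where "pp l b u = PE (L (gP l b) u)"

lemma cc_E: "cc l b \<in> EE" unfolding cc_def by (rule PE_in)
lemma pp_E: "pp l b u \<in> EE" unfolding pp_def by (rule PE_in)

lemma L_eta2_eta1: assumes "l > 0" shows "B (L (gP l b) \<eta>2) \<eta>1 = of_real (1 / chi l)"
proof -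
  have "B (L (gP l b) \<eta>2) \<eta>1 = B (L (gP l b) \<eta>2) (L (gP l b) (of_real (1 / chi l) *\<^sub>C \<eta>1))"
    using eta1_pre[OF assms] by simp
  also have "\<dots> = B \<eta>2 (of_real (1 / chi l) *\<^sub>C \<eta>1)" using unitaryB_B[OF L_unitary[OF assms]] by simp
  also have "\<dots> = of_real (1 / chi l)" by (simp add: B_simps e21)
  finally show ?thesis .
qed

lemma L_E_eta1: assumes "l > 0" "u \<in> EE" shows "B (L (gP l b) u) \<eta>1 = 0"
proof -
  have "B (L (gP l b) u) \<eta>1 = B (L (gP l b) u) (L (gP l b) (of_real (1 / chi l) *\<^sub>C \<eta>1))"
    using eta1_pre[OF assms(1)] by simp
  also have "\<dots> = B u (of_real (1 / chi l) *\<^sub>C \<eta>1)" using unitaryB_B[OF L_unitary[OF assms(1)]] by simp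
  also have "\<dots> = 0" using assms(2) by (simp add: B_simps EE_def)
  finally show ?thesis .
qed

lemma L_eta2_decomp: "l > 0 \<Longrightarrow> L (gP l b) \<eta>2 = B (L (gP l b) \<eta>2) \<eta>2 *\<^sub>C \<eta>1 + of_real (1 / chi l) *\<^sub>C \<eta>2 + cc l b"
  using decomp[of "L (gP l b) \<eta>2"] L_eta2_eta1 unfolding cc_def by simp

lemma L_eta2_Re: assumes "l > 0"
  shows "Re (B (L (gP l b) \<eta>2) \<eta>2) = - chi l * Re (B (cc l b) (cc l b)) / 2"
proof -
  define \<beta> where "\<beta> = B (L (gP l b) \<eta>2) \<eta>2"
  have "0 = B (L (gP l b) \<eta>2) (L (gP l b) \<eta>2)" using unitaryB_B[OF L_unitary[OF assms]] e22 by simp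
  also have "\<dots> = \<beta> * of_real (1 / chi l) + of_real (1 / chi l) * cnj \<beta> + B (cc l b) (cc l b)"
    using L_eta2_decomp[OF assms] master[OF cc_E cc_E] unfolding \<beta>_def by (metis complex_cnj_complex_of_real)
  finally have "Re (\<beta> * of_real (1 / chi l) + of_real (1 / chi l) * cnj \<beta> + B (cc l b) (cc l b)) = 0" by simp
  then have "2 * Re \<beta> / chi l + Re (B (cc l b) (cc l b)) = 0" by simp
  then show ?thesis unfolding \<beta>_def using chi_pos[OF assms] by (simp add: field_simps)
qed

lemma L_eta2_form: assumes "l > 0"
  shows "L (gP l b) \<eta>2 =
          (complex_of_real (- chi l * Re (B (cc l b) (cc l b)) / 2) + \<i> * complex_of_real (Dl l b)) *\<^sub>C \<eta>1
          + complex_of_real (1 / chi l) *\<^sub>C \<eta>2 + cc l b"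
proof -
  have e: "B (L (gP l b) \<eta>2) \<eta>2 = complex_of_real (- chi l * Re (B (cc l b) (cc l b)) / 2) + \<i> * complex_of_real (Dl l b)"
    using L_eta2_Re[OF assms] unfolding Dl_def by (simp add: complex_eq_iff)
  have d: "L (gP l b) \<eta>2 = B (L (gP l b) \<eta>2) \<eta>2 *\<^sub>C \<eta>1 + of_real (1 / chi l) *\<^sub>C \<eta>2 + cc l b"
    by (rule L_eta2_decomp[OF assms])
  from d[unfolded e] show ?thesis .
qed

lemma L_E_form: assumes "l > 0" "u \<in> EE"
  shows "L (gP l b) u = (- complex_of_real (chi l) * B (pp l b u) (cc l b)) *\<^sub>C \<eta>1 + pp l b u"
proof -
  define \<alpha> where "\<alpha> = B (L (gP l b) u) \<eta>2"
  have d: "L (gP l b) u = \<alpha> *\<^sub>C \<eta>1 + 0 *\<^sub>C \<eta>2 + pp l b u"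
    using decomp[of "L (gP l b) u"] L_E_eta1[OF assms] unfolding \<alpha>_def pp_def by simp
  have "0 = B (L (gP l b) u) (L (gP l b) \<eta>2)" using unitaryB_B[OF L_unitary[OF assms(1)]] assms(2) by (simp add: EE_def)
  also have "\<dots> = \<alpha> * of_real (1 / chi l) + B (pp l b u) (cc l b)"
    using d L_eta2_decomp[OF assms(1)] master[OF pp_E cc_E] by (metis complex_cnj_complex_of_real complex_cnj_zero mult_zero_left add_0_right add_0)
  finally have "\<alpha> = - of_real (chi l) * B (pp l b u) (cc l b)"
    using chi_pos[OF assms(1)] by (simp add: field_simps) (metis add.commute add_eq_0_iff mult.commute)
  then show ?thesis using d by simp
qed

end



context mainloc begin

lemma cscale_split: "a *\<^sub>C v = Re a *\<^sub>R v + Im a *\<^sub>R (\<i> *\<^sub>C v)"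
proof -
  have "a = complex_of_real (Re a) + complex_of_real (Im a) * \<i>" by (simp add: complex_eq_iff)
  then have "a *\<^sub>C v = complex_of_real (Re a) *\<^sub>C v + (complex_of_real (Im a) * \<i>) *\<^sub>C v"
    by (metis cscale_add_left)
  also have "\<dots> = Re a *\<^sub>R v + Im a *\<^sub>R (\<i> *\<^sub>C v)"
    by (simp add: scaleR_cscale cscale_cscale)
  finally show ?thesis .
qed

lemma cscale_cont: assumes "continuous_on S g" shows "continuous_on S (\<lambda>x. g x *\<^sub>C (v::'h))"
proof -
  have e: "(\<lambda>x. g x *\<^sub>C v) = (\<lambda>x. Re (g x) *\<^sub>R v + Im (g x) *\<^sub>R (\<i> *\<^sub>C v))"
    by (rule ext) (rule cscale_split)
  show ?thesis unfolding e
    by (intro continuous_on_add continuous_on_scaleR continuous_on_Re continuous_on_Im continuous_on_const assms)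
qed

lemma PE_cont: "continuous_on S f \<Longrightarrow> continuous_on S (\<lambda>x. PE (f x))"
  unfolding PE_def by (intro continuous_intros cscale_cont B_continuous_on)

definition beta :: "real \<Rightarrow> real \<Rightarrow> complex" where "beta l b = B (L (gP l b) \<eta>2) \<eta>2"

lemma beta_Im: "Im (beta l b) = Dl l b" unfolding beta_def Dl_def ..


lemma L_eta2_dec': "l > 0 \<Longrightarrow> L (gP l b) \<eta>2 = beta l b *\<^sub>C \<eta>1 + of_real (1 / chi l) *\<^sub>C \<eta>2 + cc l b"
  unfolding beta_def by (rule L_eta2_decomp)

lemma beta_Re: "l > 0 \<Longrightarrow> Re (beta l b) = - chi l * Re (B (cc l b) (cc l b)) / 2"
  unfolding beta_def by (rule L_eta2_Re)

lemma L_add: "l > 0 \<Longrightarrow> L (gP l b) (x + y) = L (gP l b) x + L (gP l b) y"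
  using unitaryB_add[OF L_unitary] by blast
lemma L_scale: "l > 0 \<Longrightarrow> L (gP l b) (a *\<^sub>C x) = a *\<^sub>C L (gP l b) x"
  using unitaryB_scale[OF L_unitary] by blast
lemma L_diff: "l > 0 \<Longrightarrow> L (gP l b) (x - y) = L (gP l b) x - L (gP l b) y"
  using unitaryB_diff[OF L_unitary] by blast
lemma L_B: "l > 0 \<Longrightarrow> B (L (gP l b) x) (L (gP l b) y) = B x y"
  using unitaryB_B[OF L_unitary] by blast

lemma pp_eq: "l > 0 \<Longrightarrow> u \<in> EE \<Longrightarrow> pp l b u = L (gP l b) u - (- complex_of_real (chi l) * B (pp l b u) (cc l b)) *\<^sub>C \<eta>1"
  using L_E_form[of l u b] by (simp add: algebra_simps)

lemma pp_comp: assumes "l > 0" "l' > 0" "u \<in> EE"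
  shows "pp l b (pp l' b' u) = pp (l*l') (l*b' + b/l') u"
proof -
  define \<alpha> where "\<alpha> = - complex_of_real (chi l') * B (pp l' b' u) (cc l' b')"
  have "pp l b (pp l' b' u) = PE (L (gP l b) (L (gP l' b') u - \<alpha> *\<^sub>C \<eta>1))"
    unfolding pp_def[of l b] using pp_eq[OF assms(2,3)] \<alpha>_def by metis
  also have "\<dots> = PE (L (gP l b) (L (gP l' b') u)) - PE ((\<alpha> * of_real (chi l)) *\<^sub>C \<eta>1)"
    using L_diff[OF assms(1)] L_scale[OF assms(1)] L_eta1[OF assms(1)] PE_diff by (simp add: cscale_cscale)
  also have "\<dots> = pp (l*l') (l*b' + b/l') u" unfolding pp_def PE_eta1 using L_hom assms by simp
  finally show ?thesis .
qed

lemma pp_one: "u \<in> EE \<Longrightarrow> pp 1 0 u = u" unfolding pp_def L_one by (rule PE_E)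

lemma pp_add: "l > 0 \<Longrightarrow> pp l b (x + y) = pp l b x + pp l b y"
  unfolding pp_def using L_add PE_add by simp
lemma pp_scale: "l > 0 \<Longrightarrow> pp l b (a *\<^sub>C x) = a *\<^sub>C pp l b x"
  unfolding pp_def using L_scale PE_scale by simp

lemma pp_B: assumes "l > 0" "x \<in> EE" "y \<in> EE" shows "B (pp l b x) (pp l b y) = B x y"
proof -
  define \<alpha> where "\<alpha> = - complex_of_real (chi l) * B (pp l b x) (cc l b)"
  define \<alpha>' where "\<alpha>' = - complex_of_real (chi l) * B (pp l b y) (cc l b)"
  have "B x y = B (L (gP l b) x) (L (gP l b) y)" using L_B[OF assms(1)] by simp
  also have "\<dots> = B (\<alpha> *\<^sub>C \<eta>1 + 0 *\<^sub>C \<eta>2 + pp l b x) (\<alpha>' *\<^sub>C \<eta>1 + 0 *\<^sub>C \<eta>2 + pp l b y)"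
    using L_E_form[OF assms(1,2)] L_E_form[OF assms(1,3)] unfolding \<alpha>_def \<alpha>'_def by simp
  also have "\<dots> = B (pp l b x) (pp l b y)" by (rule trans[OF master[OF pp_E pp_E]]) simp
  finally show ?thesis by simp
qed

lemma pp_unitary: assumes "l > 0" shows "unitary_on B EE (pp l b)"
  unfolding unitary_on_def
proof (intro conjI ballI allI)
  show "pp l b (x + y) = pp l b x + pp l b y" for x y using pp_add[OF assms] .
  show "pp l b (a *\<^sub>C x) = a *\<^sub>C pp l b x" for a x using pp_scale[OF assms] .
  show "B (pp l b x) (pp l b y) = B x y" if "x \<in> EE" "y \<in> EE" for x y using pp_B[OF assms that] .
  have il: "1/l > 0" using assms by simp
  show "bij_betw (pp l b) EE EE"
  proof (rule bij_betw_byWitness[where f' = "pp (1/l) (-b)"])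
    show "\<forall>a\<in>EE. pp (1 / l) (- b) (pp l b a) = a"
      using pp_comp[OF il assms] pp_one assms by simp
    show "\<forall>a\<in>EE. pp l b (pp (1 / l) (- b) a) = a"
      using pp_comp[OF assms il] pp_one assms by simp
    show "pp l b ` EE \<subseteq> EE" using pp_E by blast
    show "pp (1 / l) (- b) ` EE \<subseteq> EE" using pp_E by blast
  qed
qed

lemma pp_group: "l > 0 \<Longrightarrow> l' > 0 \<Longrightarrow> l'' > 0 \<Longrightarrow> gP l b ** gP l' b' = gP l'' b'' \<Longrightarrow> u \<in> EE \<Longrightarrow>
   pp l b (pp l' b' u) = pp l'' b'' u"
  using pp_comp gP_mult by (metis pp_def)

lemma cont_Dl: "continuous_on ({0<..} \<times> UNIV) (\<lambda>p. Dl (fst p) (snd p))"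
  unfolding Dl_def by (intro continuous_intros B_continuous_on L_cont)

lemma cont_cc: "continuous_on ({0<..} \<times> UNIV) (\<lambda>p. cc (fst p) (snd p))"
  unfolding cc_def by (intro PE_cont L_cont)

lemma cont_pp: "continuous_on ({0<..} \<times> UNIV) (\<lambda>p. pp (fst p) (snd p) u)"
  unfolding pp_def by (intro PE_cont L_cont)

lemma Dl_cc_zero: "l > 0 \<Longrightarrow> Dl l 0 = 0 \<and> cc l 0 = 0"
  unfolding Dl_def cc_def using L_eta2_a[of l] PE_eta2 by (simp add: B_simps e22)

lemma L_E_a: assumes "l > 0" "u \<in> EE" shows "L (gP l 0) u = pp l 0 u"
  using L_E_form[OF assms, of 0] Dl_cc_zero[OF assms(1)] by simp

lemma chi1: "chi 1 = 1" by (rule chi_one)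

lemma L1_eta2: "L (gP 1 b) \<eta>2 = beta 1 b *\<^sub>C \<eta>1 + \<eta>2 + cc 1 b"
  using L_eta2_dec'[of 1 b] chi1 by (simp add: cscale_one)

lemma prop4: "cc 1 (b + d) = cc 1 b + pp 1 b (cc 1 d)"
proof -
  have "L (gP 1 (b + d)) \<eta>2 = L (gP 1 b) (L (gP 1 d) \<eta>2)" using L_hom[of 1 1 b d] by (simp add: add.commute)
  also have "\<dots> = beta 1 d *\<^sub>C L (gP 1 b) \<eta>1 + L (gP 1 b) \<eta>2 + L (gP 1 b) (cc 1 d)"
    unfolding L1_eta2[of d] using L_add[of 1] L_scale[of 1] by simp
  finally have "cc 1 (b + d) = PE (beta 1 d *\<^sub>C L (gP 1 b) \<eta>1) + cc 1 b + pp 1 b (cc 1 d)"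
    unfolding cc_def[of 1 "b+d"] by (simp add: PE_add cc_def pp_def)
  then show ?thesis using L_eta1[of 1] chi1 by (simp add: cscale_cscale PE_eta1)
qed

lemma conj_rel: assumes "l > 0"
  shows "L (gP l 0) (L (gP 1 b) \<eta>2) = of_real (1 / chi l) *\<^sub>C L (gP 1 (l\<^sup>2 * b)) \<eta>2"
proof -
  have "L (gP l 0) (L (gP 1 b) \<eta>2) = L (gP l (l * b)) \<eta>2" using L_hom[of l 1 0 b] assms by simp
  also have "\<dots> = L (gP 1 (l\<^sup>2 * b)) (L (gP l 0) \<eta>2)"
    using L_hom[of 1 l "l\<^sup>2 * b" 0] assms by (simp add: power2_eq_square)
  also have "\<dots> = of_real (1 / chi l) *\<^sub>C L (gP 1 (l\<^sup>2 * b)) \<eta>2"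
    using L_eta2_a[OF assms] L_scale[of 1] by simp
  finally show ?thesis .
qed

lemma conj_lhs: assumes "l > 0"
  shows "L (gP l 0) (L (gP 1 b) \<eta>2) = (beta 1 b * of_real (chi l)) *\<^sub>C \<eta>1 + of_real (1 / chi l) *\<^sub>C \<eta>2 + pp l 0 (cc 1 b)"
proof -
  have "L (gP l 0) (L (gP 1 b) \<eta>2) = beta 1 b *\<^sub>C L (gP l 0) \<eta>1 + L (gP l 0) \<eta>2 + L (gP l 0) (cc 1 b)"
    unfolding L1_eta2 using L_add[OF assms] L_scale[OF assms] by simp
  then show ?thesis using L_eta1[OF assms] L_eta2_a[OF assms] L_E_a[OF assms cc_E] by (simp add: cscale_cscale)
qed

lemma prop6: assumes "l > 0" shows "chi l *\<^sub>R pp l 0 (cc 1 b) = cc 1 (l\<^sup>2 * b)"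
proof -
  have "PE (L (gP l 0) (L (gP 1 b) \<eta>2)) = pp l 0 (cc 1 b)"
    unfolding conj_lhs[OF assms] PE_add PE_eta1 PE_eta2 using PE_E[OF pp_E] by simp
  moreover have "PE (L (gP l 0) (L (gP 1 b) \<eta>2)) = of_real (1 / chi l) *\<^sub>C cc 1 (l\<^sup>2 * b)"
    unfolding conj_rel[OF assms] PE_scale cc_def ..
  ultimately have "pp l 0 (cc 1 b) = of_real (1 / chi l) *\<^sub>C cc 1 (l\<^sup>2 * b)" by simp
  then have "of_real (chi l) *\<^sub>C pp l 0 (cc 1 b) = cc 1 (l\<^sup>2 * b)"
    using chi_pos[OF assms] by (simp add: cscale_cscale cscale_one)
  then show ?thesis by (simp add: scaleR_cscale)
qed

lemma prop7: assumes "l > 0" shows "(chi l)\<^sup>2 * Dl 1 b = Dl 1 (l\<^sup>2 * b)"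
proof -
  have "B (L (gP l 0) (L (gP 1 b) \<eta>2)) \<eta>2 = beta 1 b * of_real (chi l)"
    unfolding conj_lhs[OF assms] using pp_E[of l 0 "cc 1 b"] by (simp add: B_simps e12 e22 EE_def)
  moreover have "B (L (gP l 0) (L (gP 1 b) \<eta>2)) \<eta>2 = of_real (1 / chi l) * beta 1 (l\<^sup>2 * b)"
    unfolding conj_rel[OF assms] beta_def by (simp add: B_simps)
  ultimately have "beta 1 b * of_real (chi l) = of_real (1 / chi l) * beta 1 (l\<^sup>2 * b)" by simp
  then have "Im (beta 1 b * of_real (chi l)) = Im (of_real (1 / chi l) * beta 1 (l\<^sup>2 * b))" by simp
  then have "Dl 1 b * chi l = Dl 1 (l\<^sup>2 * b) / chi l" unfolding beta_Im[symmetric] by simp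
  then show ?thesis using chi_pos[OF assms] by (simp add: field_simps power2_eq_square)
qed

lemma Bcc: "B (cc 1 d) (cc 1 b) = beta 1 (d - b) - beta 1 d - cnj (beta 1 b)"
proof -
  have "B (L (gP 1 d) \<eta>2) (L (gP 1 b) \<eta>2) = B (L (gP 1 b) (L (gP 1 (d - b)) \<eta>2)) (L (gP 1 b) \<eta>2)"
    using L_hom[of 1 1 b "d - b"] by simp
  also have "\<dots> = beta 1 (d - b)" unfolding beta_def using L_B[of 1] by simp
  finally have "B (L (gP 1 d) \<eta>2) (L (gP 1 b) \<eta>2) = beta 1 (d - b)" .
  moreover have "B (L (gP 1 d) \<eta>2) (L (gP 1 b) \<eta>2) = beta 1 d + cnj (beta 1 b) + B (cc 1 d) (cc 1 b)"
  proof -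
    have "B (beta 1 d *\<^sub>C \<eta>1 + 1 *\<^sub>C \<eta>2 + cc 1 d) (beta 1 b *\<^sub>C \<eta>1 + 1 *\<^sub>C \<eta>2 + cc 1 b)
       = beta 1 d * cnj 1 + 1 * cnj (beta 1 b) + B (cc 1 d) (cc 1 b)" by (rule master[OF cc_E cc_E])
    then show ?thesis unfolding L1_eta2 by (simp add: cscale_one)
  qed
  ultimately show ?thesis by (simp add: algebra_simps)
qed

lemma prop9: "Im (B (cc 1 d) (cc 1 b)) = Dl 1 (d - b) - Dl 1 d + Dl 1 b"
  unfolding Bcc by (simp add: beta_Im)

lemma prop10: "Re (B (cc 1 d) (cc 1 b)) =
        - Re (B (cc 1 (d - b)) (cc 1 (d - b))) / 2 + Re (B (cc 1 b) (cc 1 b)) / 2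
        + Re (B (cc 1 d) (cc 1 d)) / 2"
proof -
  have "Re (B (cc 1 d) (cc 1 b)) = Re (beta 1 (d - b)) - Re (beta 1 d) - Re (beta 1 b)"
    using Bcc[of d b] by simp
  then show ?thesis using beta_Re[of 1 "d-b"] beta_Re[of 1 d] beta_Re[of 1 b] chi1 by simp
qed

lemma prop8: "Dl 1 (- b) = - Dl 1 b"
  using prop9[of 0 b] Dl_cc_zero[of 1] by simp


end


lemma SU11_mult: assumes "g \<in> SU11" "h \<in> SU11" shows "g ** h \<in> SU11"
proof -
  have "det (g ** h) = 1" using assms unfolding SU11_def by (simp add: det_mul)
  moreover have "B11 ((g ** h) *v z) ((g ** h) *v w) = B11 z w" for z w
    using assms unfolding SU11_def by (simp add: matrix_vector_mul_assoc[symmetric])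
  ultimately show ?thesis unfolding SU11_def by blast
qed

context mainloc begin

lemma R_of_L: assumes "l > 0" obtains \<theta> where "\<theta> \<noteq> 0" "\<And>v. R (gP l b) v = \<theta> *\<^sub>C L (gP l b) v"
proof -
  obtain \<theta> where th: "cmod \<theta> = 1" "\<And>v. L (gP l b) v = \<theta> *\<^sub>C R (gP l b) v"
    using L_proj[OF gP_Pgrp[OF assms]] by blast
  have "\<theta> \<noteq> 0" using th by auto
  have "R (gP l b) v = (1/\<theta>) *\<^sub>C L (gP l b) v" for v using th \<open>\<theta> \<noteq> 0\<close> by (simp add: cscale_cscale cscale_one)
  moreover have "1/\<theta> \<noteq> 0" using \<open>\<theta> \<noteq> 0\<close> by simp
  ultimately show ?thesis using that by blast
qed

lemma R_cline_of_L: "l > 0 \<Longrightarrow> L (gP l b) v \<in> cline w \<Longrightarrow> R (gP l b) v \<in> cline w"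
  by (metis R_of_L cline_scale)

lemma L_cline_of_R: "l > 0 \<Longrightarrow> R (gP l b) v \<in> cline w \<Longrightarrow> L (gP l b) v \<in> cline w"
  by (metis L_proj gP_Pgrp cline_scale)

lemma lemmaC:
  assumes y: "Re (B y y) > 0" and fixA: "\<forall>l>0. R (gP l 0) y \<in> cline y"
  shows "R (gP 1 b) y \<in> cline y"
proof -
  define s where "s = Re (B y y)"
  have Byy: "B y y = of_real s" unfolding s_def by (rule B_self_real)
  have s: "s > 0" using y s_def by simp
  define f where "f t = cmod (B (L (gP 1 t) y) y)" for t
  have mu: "\<exists>\<mu>. L (gP l 0) y = \<mu> *\<^sub>C y \<and> \<mu> * cnj \<mu> = 1" if l: "l > 0" for l
  proof -
    obtain \<mu> where m: "L (gP l 0) y = \<mu> *\<^sub>C y" using L_cline_of_R[OF l] fixA l unfolding cline_def by blast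
    have "B (L (gP l 0) y) (L (gP l 0) y) = B y y" using L_B[OF l] by simp
    then have "\<mu> * cnj \<mu> * of_real s = of_real s" using m Byy by (simp add: B_simps algebra_simps)
    then have "\<mu> * cnj \<mu> = 1" using s by simp
    then show ?thesis using m by blast
  qed
  have scale: "f (l\<^sup>2 * t) = f t" if l: "l > 0" for l t
  proof -
    have il: "1/l > 0" using l by simp
    obtain \<mu> where m: "L (gP (1/l) 0) y = \<mu> *\<^sub>C y" "\<mu> * cnj \<mu> = 1" using mu[OF il] by blast
    have yy: "y = L (gP l 0) (\<mu> *\<^sub>C y)"
      using L_hom[OF l il, of 0 0 y] L_one m(1) l by simp
    have "L (gP 1 (l\<^sup>2 * t)) y = L (gP l 0) (L (gP 1 t) (L (gP (1/l) 0) y))"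
    proof -
      have "L (gP l 0) (L (gP 1 t) (L (gP (1/l) 0) y)) = L (gP l (l * t)) (L (gP (1/l) 0) y)"
        using L_hom[OF l, of 1 0 t] by simp
      also have "\<dots> = L (gP 1 (l\<^sup>2 * t)) y"
        using L_hom[OF l il, of "l * t" 0 y] l by (simp add: power2_eq_square mult.commute mult.left_commute)
      finally show ?thesis by simp
    qed
    then have "B (L (gP 1 (l\<^sup>2 * t)) y) y = B (L (gP l 0) (L (gP 1 t) (\<mu> *\<^sub>C y))) (L (gP l 0) (\<mu> *\<^sub>C y))"
      using m(1) yy by metis
    also have "\<dots> = B (L (gP 1 t) (\<mu> *\<^sub>C y)) (\<mu> *\<^sub>C y)" using L_B[OF l] by simp
    also have "\<dots> = (\<mu> * cnj \<mu>) * B (L (gP 1 t) y) y" using L_scale[of 1] by (simp add: B_simps)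
    finally have "B (L (gP 1 (l\<^sup>2 * t)) y) y = B (L (gP 1 t) y) y" using m(2) by simp
    then show ?thesis unfolding f_def by simp
  qed
  have contf: "continuous_on UNIV f"
    unfolding f_def by (intro continuous_intros B_continuous_on L_cont1)
  have f0: "f 0 = s" unfolding f_def L_one Byy using s by simp
  have "((\<lambda>l. f (l\<^sup>2 * b)) \<longlongrightarrow> f (0\<^sup>2 * b)) (at_right 0)"
  proof -
    have "isCont (\<lambda>l. f (l\<^sup>2 * b)) 0"
      by (rule continuous_on_interior[of UNIV]) (auto intro!: continuous_intros intro: continuous_on_compose2[OF contf])
    then show ?thesis by (simp add: isCont_def filterlim_at_split)
  qed
  then have "((\<lambda>l. f (l\<^sup>2 * b)) \<longlongrightarrow> s) (at_right 0)" using f0 by simp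
  moreover have "\<forall>\<^sub>F l in at_right 0. f (l\<^sup>2 * b) = f b"
    using scale by (simp add: eventually_at_right_less eventually_mono[OF eventually_at_right_less] )
  ultimately have "((\<lambda>l. f b) \<longlongrightarrow> s) (at_right (0::real))"
    by (rule Lim_transform_eventually)
  then have fb: "f b = s" using tendsto_const_iff[of "at_right (0::real)" "f b" s] by simp
  define z where "z = L (gP 1 b) y"
  have "B z z = B y y" unfolding z_def using L_B[of 1] by simp
  moreover have "cmod (B z y) = Re (B y y)" using fb unfolding f_def z_def s_def by simp
  ultimately have "z \<in> cline y" using equality_case[OF y] by blast
  then show ?thesis unfolding z_def by (rule R_cline_of_L[rotated]) simp
qed

lemma conjfix:
  assumes g: "g \<in> SU11" and h: "h \<in> SU11" and rel: "g ** Wm = Wm ** h" and fx: "R h x \<in> cline x"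
  shows "R g (R Wm x) \<in> cline (R Wm x)"
proof -
  obtain \<theta>1 where t1: "\<theta>1 \<noteq> 0" "\<And>v. R g (R Wm v) = \<theta>1 *\<^sub>C R (g ** Wm) v" using R_comp[OF g Wm_SU11] by blast
  obtain \<theta>2 where t2: "\<theta>2 \<noteq> 0" "\<And>v. R Wm (R h v) = \<theta>2 *\<^sub>C R (Wm ** h) v" using R_comp[OF Wm_SU11 h] by blast
  obtain a where a: "R h x = a *\<^sub>C x" using fx unfolding cline_def by blast
  have "R (Wm ** h) x = (1/\<theta>2) *\<^sub>C R Wm (R h x)" using t2 by (simp add: cscale_cscale cscale_one)
  also have "\<dots> = (a/\<theta>2) *\<^sub>C R Wm x" using a unitaryB_scale[OF R_unitary[OF Wm_SU11]] by (simp add: cscale_cscale)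
  finally have "R g (R Wm x) = (\<theta>1 * (a/\<theta>2)) *\<^sub>C R Wm x" using t1 rel by (simp add: cscale_cscale)
  then show ?thesis unfolding cline_def by blast
qed

lemma fix_P:
  assumes y: "Re (B y y) > 0" and fixA: "\<forall>l>0. R (gP l 0) y \<in> cline y"
  shows "l > 0 \<Longrightarrow> R (gP l b) y \<in> cline y"
proof -
  assume l: "l > 0"
  have "gP 1 (b * l) ** gP l 0 = gP l b" using gP_mult[of 1 "b*l" l 0] l by simp
  moreover have "R (gP 1 (b * l) ** gP l 0) y \<in> cline y"
    by (rule R_fix_comp[OF gP_SU11 gP_SU11 lemmaC[OF y fixA] fixA[rule_format]]) (use l in auto)
  ultimately show ?thesis by simp
qed

lemma chi_nontrivial: "\<exists>l>0. chi l \<noteq> 1"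
proof (rule ccontr)
  assume "\<not> (\<exists>l>0. chi l \<noteq> 1)"
  then have c1: "\<And>l. l > 0 \<Longrightarrow> chi l = 1" by blast
  define x where "x = \<eta>1 + \<eta>2"
  have Bxx: "B x x = 2" unfolding x_def by (simp add: B_simps e11 e12 e21 e22)
  have xpos: "Re (B x x) > 0" using Bxx by simp
  have fxA: "\<forall>l>0. R (gP l 0) x \<in> cline x"
  proof (intro allI impI)
    fix l :: real assume l: "l > 0"
    have "L (gP l 0) x = x"
      unfolding x_def using L_add[OF l] L_eta1[OF l] L_eta2_a[OF l] c1[OF l] by (simp add: cscale_one)
    then have "L (gP l 0) x \<in> cline x" unfolding cline_def by (metis cscale_one rangeI)
    then show "R (gP l 0) x \<in> cline x" by (rule R_cline_of_L[OF l])
  qed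
  have fxP: "\<And>l b. l > 0 \<Longrightarrow> R (gP l b) x \<in> cline x" using fix_P[OF xpos fxA] by blast
  define y where "y = R Wm x"
  have Byy: "B y y = 2" unfolding y_def using unitaryB_B[OF R_unitary[OF Wm_SU11]] Bxx by simp
  have ypos: "Re (B y y) > 0" using Byy by simp
  have y0: "y \<noteq> 0" using Byy by auto
  have fyA: "\<forall>l>0. R (gP l 0) y \<in> cline y"
  proof (intro allI impI)
    fix l :: real assume l: "l > 0"
    show "R (gP l 0) y \<in> cline y" unfolding y_def
      by (rule conjfix[OF gP_SU11[OF l] gP_SU11 gP_Wm fxP]) (use l in auto)
  qed
  have fyP: "\<And>l b. l > 0 \<Longrightarrow> R (gP l b) y \<in> cline y" using fix_P[OF ypos fyA] by blast
  have fyU: "R (Um c) y \<in> cline y" for c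
    unfolding y_def by (rule conjfix[OF Um_SU11 gP_SU11 Um_Wm fxP]) auto
  have fym: "R (- mat 1) y \<in> cline y" by (rule R_minus_one_fix)
  have "\<forall>g\<in>SU11. R g y \<in> cline y"
  proof
    fix g assume g: "g \<in> SU11"
    from SU11_decomp[OF g] show "R g y \<in> cline y"
    proof (elim disjE exE conjE)
      fix l b assume "l > 0" "g = gP l b" then show ?thesis using fyP by simp
    next
      fix l b assume l: "l > 0" and "g = - mat 1 ** gP l b"
      then show ?thesis using R_fix_comp[OF minus_one_SU11 gP_SU11[OF l] fym fyP[OF l]] by simp
    next
      fix a c d assume gg: "g = gP 1 a ** Um c ** gP 1 d"
      have "R (gP 1 a ** Um c) y \<in> cline y"
        by (rule R_fix_comp[OF gP_SU11 Um_SU11 fyP fyU]) auto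
      then have "R ((gP 1 a ** Um c) ** gP 1 d) y \<in> cline y"
        by (intro R_fix_comp[OF SU11_mult[OF gP_SU11 Um_SU11] gP_SU11 _ fyP]) auto
      then show ?thesis using gg by simp
    qed
  qed
  then have "\<exists>v. v \<noteq> 0 \<and> Re (B v v) \<ge> 0 \<and> (\<forall>g\<in>SU11. R g v \<in> cline v)"
    using y0 ypos by (intro exI[of _ y]) auto
  then show False using irred unfolding irreducible_rep_def by blast
qed


end


theorem mainTheorem8:
  fixes B :: "'h::{cnormed_vector,banach} \<Rightarrow> 'h \<Rightarrow> complex"
    and R :: "complex^2^2 \<Rightarrow> 'h \<Rightarrow> 'h"
    and L :: "complex^2^2 \<Rightarrow> 'h \<Rightarrow> 'h"
    and \<eta>1 \<eta>2 :: 'h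
  assumes form: "sig_1_infty_form B"
    and rep: "proj_rep B R"
    and irred: "irreducible_rep B R"
    and eta_iso: "\<eta>1 \<noteq> 0" "\<eta>2 \<noteq> 0" "B \<eta>1 \<eta>1 = 0" "B \<eta>2 \<eta>2 = 0" "B \<eta>1 \<eta>2 = 1"
    and eta1_fix: "\<forall>g\<in>Pgrp. R g \<eta>1 \<in> cline \<eta>1"
    and eta2_fix: "\<forall>l>0. R (gP l 0) \<eta>2 \<in> cline \<eta>2"
    and lift_unitary: "\<forall>g\<in>Pgrp. unitaryB B (L g)"
    and lift_proj: "\<forall>g\<in>Pgrp. \<exists>\<theta>. cmod \<theta> = 1 \<and> L g = (\<lambda>v. \<theta> *\<^sub>C R g v)"
    and lift_hom: "\<forall>g\<in>Pgrp. \<forall>h\<in>Pgrp. L (g ** h) = L g \<circ> L h"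
    and lift_cont: "\<forall>v. continuous_on Pgrp (\<lambda>g. L g v)"
    and lift_norm: "\<forall>g\<in>Pgrp. Im (B (L g \<eta>1) \<eta>2) = 0 \<and> Re (B (L g \<eta>1) \<eta>2) > 0"
  defines "E \<equiv> {u. B u \<eta>1 = 0 \<and> B u \<eta>2 = 0}"
  shows "\<exists>(chi :: real \<Rightarrow> real) (\<Delta> :: real \<Rightarrow> real \<Rightarrow> real) (c :: real \<Rightarrow> real \<Rightarrow> 'h)
            (\<pi> :: real \<Rightarrow> real \<Rightarrow> 'h \<Rightarrow> 'h).
     \<comment> \<open>chi is a continuous isomorphism of the multiplicative group R_{>0}\<close>
     (\<forall>x>0. chi x > 0) \<and> (\<forall>x>0. \<forall>y>0. chi (x * y) = chi x * chi y) \<and>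
     bij_betw chi {0<..} {0<..} \<and> continuous_on {0<..} chi \<and>
     \<comment> \<open>matrix form of L (g(l,b)) with respect to C eta1 (+) C eta2 (+) E\<close>
     (\<forall>l>0. \<forall>b.
        L (gP l b) \<eta>1 = complex_of_real (chi l) *\<^sub>C \<eta>1 \<and>
        L (gP l b) \<eta>2 =
          (complex_of_real (- chi l * Re (B (c l b) (c l b)) / 2) + \<i> * complex_of_real (\<Delta> l b)) *\<^sub>C \<eta>1
          + complex_of_real (1 / chi l) *\<^sub>C \<eta>2 + c l b \<and>
        (\<forall>u\<in>E. L (gP l b) u =
           (- complex_of_real (chi l) * B (\<pi> l b u) (c l b)) *\<^sub>C \<eta>1 + \<pi> l b u)) \<and>
     \<comment> \<open>(1)\<close>
     continuous_on ({0<..} \<times> UNIV) (\<lambda>p. \<Delta> (fst p) (snd p)) \<and>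
     \<comment> \<open>(2)\<close>
     (\<forall>l>0. \<forall>b. c l b \<in> E) \<and>
     continuous_on ({0<..} \<times> UNIV) (\<lambda>p. c (fst p) (snd p)) \<and>
     \<comment> \<open>(3)\<close>
     (\<forall>l>0. \<forall>b. unitary_on B E (\<pi> l b)) \<and>
     (\<forall>l b l' b' l'' b''. l > 0 \<longrightarrow> l' > 0 \<longrightarrow> l'' > 0 \<longrightarrow>
        gP l b ** gP l' b' = gP l'' b'' \<longrightarrow> (\<forall>u\<in>E. \<pi> l b (\<pi> l' b' u) = \<pi> l'' b'' u)) \<and>
     (\<forall>u\<in>E. continuous_on ({0<..} \<times> UNIV) (\<lambda>p. \<pi> (fst p) (snd p) u)) \<and>
     \<comment> \<open>(4)\<close>
     (\<forall>b d. c 1 (b + d) = c 1 b + \<pi> 1 b (c 1 d)) \<and>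
     \<comment> \<open>(5)\<close>
     (\<forall>l>0. \<Delta> l 0 = 0 \<and> c l 0 = 0) \<and>
     \<comment> \<open>(6)\<close>
     (\<forall>l>0. \<forall>b. chi l *\<^sub>R \<pi> l 0 (c 1 b) = c 1 (l\<^sup>2 * b)) \<and>
     \<comment> \<open>(7)\<close>
     (\<forall>l>0. \<forall>b. (chi l)\<^sup>2 * \<Delta> 1 b = \<Delta> 1 (l\<^sup>2 * b)) \<and>
     \<comment> \<open>(8)\<close>
     (\<forall>b. \<Delta> 1 (- b) = - \<Delta> 1 b) \<and>
     \<comment> \<open>(9)\<close>
     (\<forall>b d. Im (B (c 1 d) (c 1 b)) = \<Delta> 1 (d - b) - \<Delta> 1 d + \<Delta> 1 b) \<and>
     \<comment> \<open>(10)\<close>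
     (\<forall>b d. Re (B (c 1 d) (c 1 b)) =
        - Re (B (c 1 (d - b)) (c 1 (d - b))) / 2 + Re (B (c 1 b) (c 1 b)) / 2
        + Re (B (c 1 d) (c 1 d)) / 2)"
proof -
  have hermB: "hermitian_form B" using form unfolding sig_1_infty_form_def by blast
  interpret mainloc B \<eta>1 \<eta>2 R L
    by unfold_locales (use hermB eta_iso form rep irred eta1_fix eta2_fix lift_unitary lift_proj lift_hom lift_cont lift_norm in auto)
  have EE: "E = EE" unfolding E_def EE_def ..
  obtain l0 where l0: "l0 > 0" "chi l0 \<noteq> 1" using chi_nontrivial by blast
  have F1: "\<forall>x>0. chi x > 0" using chi_pos by blast
  have F2: "\<forall>x>0. \<forall>y>0. chi (x * y) = chi x * chi y" using chi_mult by blast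
  have F3: "bij_betw chi {0<..} {0<..}" by (rule chi_bij[OF F1 F2 chi_cont l0])
  have F4: "continuous_on {0<..} chi" by (rule chi_cont)
  have F5: "\<forall>l>0. \<forall>b.
        L (gP l b) \<eta>1 = complex_of_real (chi l) *\<^sub>C \<eta>1 \<and>
        L (gP l b) \<eta>2 =
          (complex_of_real (- chi l * Re (B (cc l b) (cc l b)) / 2) + \<i> * complex_of_real (Dl l b)) *\<^sub>C \<eta>1
          + complex_of_real (1 / chi l) *\<^sub>C \<eta>2 + cc l b \<and>
        (\<forall>u\<in>EE. L (gP l b) u =
           (- complex_of_real (chi l) * B (pp l b u) (cc l b)) *\<^sub>C \<eta>1 + pp l b u)"
    using L_eta1 L_eta2_form L_E_form by blast
  have F6: "continuous_on ({0<..} \<times> UNIV) (\<lambda>p. Dl (fst p) (snd p))" by (rule cont_Dl)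
  have F7: "\<forall>l>0. \<forall>b. cc l b \<in> EE" using cc_E by blast
  have F8: "continuous_on ({0<..} \<times> UNIV) (\<lambda>p. cc (fst p) (snd p))" by (rule cont_cc)
  have F9: "\<forall>l>0. \<forall>b. unitary_on B EE (pp l b)" using pp_unitary by blast
  have F10: "\<forall>l b l' b' l'' b''. l > 0 \<longrightarrow> l' > 0 \<longrightarrow> l'' > 0 \<longrightarrow>
        gP l b ** gP l' b' = gP l'' b'' \<longrightarrow> (\<forall>u\<in>EE. pp l b (pp l' b' u) = pp l'' b'' u)"
    using pp_group by blast
  have F11: "\<forall>u\<in>EE. continuous_on ({0<..} \<times> UNIV) (\<lambda>p. pp (fst p) (snd p) u)" using cont_pp by blast
  have F12: "\<forall>b d. cc 1 (b + d) = cc 1 b + pp 1 b (cc 1 d)" using prop4 by blast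
  have F13: "\<forall>l>0. Dl l 0 = 0 \<and> cc l 0 = 0" using Dl_cc_zero by blast
  have F14: "\<forall>l>0. \<forall>b. chi l *\<^sub>R pp l 0 (cc 1 b) = cc 1 (l\<^sup>2 * b)" using prop6 by blast
  have F15: "\<forall>l>0. \<forall>b. (chi l)\<^sup>2 * Dl 1 b = Dl 1 (l\<^sup>2 * b)" using prop7 by blast
  have F16: "\<forall>b. Dl 1 (- b) = - Dl 1 b" using prop8 by blast
  have F17: "\<forall>b d. Im (B (cc 1 d) (cc 1 b)) = Dl 1 (d - b) - Dl 1 d + Dl 1 b" using prop9 by blast
  have F18: "\<forall>b d. Re (B (cc 1 d) (cc 1 b)) =
        - Re (B (cc 1 (d - b)) (cc 1 (d - b))) / 2 + Re (B (cc 1 b) (cc 1 b)) / 2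
        + Re (B (cc 1 d) (cc 1 d)) / 2" using prop10 by blast
  show ?thesis unfolding EE
    apply (intro exI[of _ chi] exI[of _ Dl] exI[of _ cc] exI[of _ pp] conjI)
    by (rule F1 F2 F3 F4 F5 F6 F7 F8 F9 F10 F11 F12 F13 F14 F15 F16 F17 F18)+
qed



end
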